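(* Let $1\le s<n$ and $A\in M_{s+1,n-s}$ (so $A$ has more than one row), and let $A'\in M_{s,n-s}$ be obtained from $A$ by removing one of its rows. Then $\omega_j(A')\ge\omega_j(A)$ for all $j=1,\dots,n-s$. If moreover the removed row is a rational linear combination of the remaining rows, then $\omega_j(A')=\omega_j(A)$ for all $j=1,\dots,n-s$.
   Context: Higher order exponents of a matrix $M\in M_{m,\ell}$: set $\sigma=m-1$, $N=m+\ell-1$, let $V=\mathbb R^{N+1}$ with basis $e_0,\dots,e_N$, $V_0=\mathrm{span}(e_1,\dots,e_N)$, $V_\bullet=\mathrm{span}(e_{\sigma+1},\dots,e_N)$; $e_I=e_{i_1}\wedge\dots\wedge e_{i_j}$; $\bigwedge(V)$ carries the inner product making $\{e_I\}$ orthonormal. $\mathcal S_{N+1,j}$ is the set of $w=v_1\wedge\dots\wedge v_j$ with $v_1,\dots,v_j\in\mathbb Z^{N+1}$ linearly independent; $\pi_\bullet$ is the orthogonal projection $\bigwedge^jV\to\bigwedge^jV_\bullet$. Index rows of $M$ by $0,\dots,\sigma$ and columns by $\sigma+1,\dots,N$, let $a_i=\sum_{k=\sigma+1}^N m_{i,k}e_k$, and let $R_Mc(w)\in(\bigwedge^{j-1}V_0)^{\sigma+1}$ have $i$-th component $\sum_{J\subset\{1,\dots,N\},\#J=j-1}\langle(e_i+a_i)\wedge e_J,w\rangle e_J$ (Euclidean norm). For $1\le j\le\ell$, $\omega_j(M)$ is the supremum of $v$ such that there exist $w\in\mathcal S_{N+1,j}$ with arbitrarily large $\|\pi_\bullet(w)\|$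 satisfying $\|R_Mc(w)\|<\|\pi_\bullet(w)\|^{-\frac{v+1-j}{j}}$. (Thus $\omega_j(A)$ uses $N=n$, and $\omega_j(A')$ uses $N=n-1$.) *)

theory Defs
  imports "Jordan_Normal_Form.Determinant" "HOL-Library.Extended_Real"
begin

text \<open>Vectors of V = R^(N+1) are functions nat \<Rightarrow> real (coordinates 0..N, zero beyond N).
  A matrix M of size m x l is a function nat \<Rightarrow> nat \<Rightarrow> real; entry M i c for i < m, c < l.
  Row i of M is indexed by i (= 0..sigma), column c corresponds to basis index sigma+1+c.\<close>

definition std_basis :: "nat \<Rightarrow> nat \<Rightarrow> real" where
  "std_basis k = (\<lambda>t. if t = k then 1 else 0)"

text \<open>Coordinate <e_I, v_1 \<and> ... \<and> v_j> for I of cardinality j: the j x j minor (Plucker coordinate).\<close>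
definition wedge_coord :: "(nat \<Rightarrow> real) list \<Rightarrow> nat set \<Rightarrow> real" where
  "wedge_coord vs I = det (mat (length vs) (length vs)
       (\<lambda>(a, b). (vs ! a) (sorted_list_of_set I ! b)))"

definition jsets :: "nat set \<Rightarrow> nat \<Rightarrow> nat set set" where
  "jsets S j = {I. I \<subseteq> S \<and> card I = j}"

text \<open>Inner product in \<And>^j V (orthonormal basis e_I, I \<subseteq> {0..N}).\<close>
definition wedge_inner :: "nat \<Rightarrow> (nat \<Rightarrow> real) list \<Rightarrow> (nat \<Rightarrow> real) list \<Rightarrow> real" where
  "wedge_inner N us vs = (\<Sum>I\<in>jsets {0..N} (length vs). wedge_coord us I * wedge_coord vs I)"

definition lin_indep_list :: "(nat \<Rightarrow> real) list \<Rightarrow> bool" where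
  "lin_indep_list vs \<longleftrightarrow>
     (\<forall>c :: nat \<Rightarrow> real. (\<forall>k. (\<Sum>t<length vs. c t * (vs ! t) k) = 0) \<longrightarrow> (\<forall>t<length vs. c t = 0))"

text \<open>Lists (v_1,...,v_j) of linearly independent integer vectors in Z^(N+1); their wedge
  products are exactly the elements of S_{N+1,j}.\<close>
definition int_frames :: "nat \<Rightarrow> nat \<Rightarrow> (nat \<Rightarrow> real) list set" where
  "int_frames N j = {vs. length vs = j \<and> (\<forall>v\<in>set vs. (\<forall>k. v k \<in> \<int>) \<and> (\<forall>k>N. v k = 0))
                         \<and> lin_indep_list vs}"

text \<open>Norm of pi_bullet(w): w projected onto \<And>^j V_bullet, V_bullet = span(e_(sigma+1),...,e_N).\<close>
definition proj_norm :: "nat \<Rightarrow> nat \<Rightarrow> (nat \<Rightarrow> real) list \<Rightarrow> real" where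
  "proj_norm \<sigma> N vs = sqrt (\<Sum>I\<in>jsets {\<sigma>+1..N} (length vs). (wedge_coord vs I)\<^sup>2)"

definition row_vec :: "nat \<Rightarrow> nat \<Rightarrow> (nat \<Rightarrow> nat \<Rightarrow> real) \<Rightarrow> nat \<Rightarrow> nat \<Rightarrow> real" where
  "row_vec \<sigma> N M i = (\<lambda>t. (\<Sum>k\<in>{\<sigma>+1..N}. M i (k - (\<sigma>+1)) * std_basis k t))"

text \<open>Euclidean norm of R_M c(w) in (\<And>^(j-1) V_0)^(sigma+1).\<close>
definition RMc_norm :: "nat \<Rightarrow> nat \<Rightarrow> (nat \<Rightarrow> nat \<Rightarrow> real) \<Rightarrow> (nat \<Rightarrow> real) list \<Rightarrow> real" where
  "RMc_norm \<sigma> N M vs = sqrt (\<Sum>i\<in>{0..\<sigma>}. \<Sum>J\<in>jsets {1..N} (length vs - 1).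
      (wedge_inner N ((\<lambda>t. std_basis i t + row_vec \<sigma> N M i t)
                        # map std_basis (sorted_list_of_set J)) vs)\<^sup>2)"

definition omega :: "nat \<Rightarrow> nat \<Rightarrow> nat \<Rightarrow> (nat \<Rightarrow> nat \<Rightarrow> real) \<Rightarrow> ereal" where
  "omega j m l M = (let \<sigma> = m - 1; N = m + l - 1 in
     Sup (ereal ` {v :: real. \<forall>B :: real. \<exists>vs\<in>int_frames N j.
            proj_norm \<sigma> N vs > B \<and>
            RMc_norm \<sigma> N M vs < proj_norm \<sigma> N vs powr (- ((v + 1 - real j) / real j))}))"

end

theory Submission
  imports Defs
begin

definition ip :: "nat \<Rightarrow> (nat \<Rightarrow> real) \<Rightarrow> (nat \<Rightarrow> real) \<Rightarrow> real" where
  "ip N u v = (\<Sum>t\<in>{0..N}. u t * v t)"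

definition Fs :: "nat \<Rightarrow> nat set \<Rightarrow> (nat \<Rightarrow> nat) set" where
  "Fs j S = {f. (\<forall>i\<in>{0..<j}. f i \<in> S) \<and> (\<forall>i. i \<notin> {0..<j} \<longrightarrow> f i = i)}"

lemma finite_Fs: "finite S \<Longrightarrow> finite (Fs j S)"
  unfolding Fs_def by (rule finite_bounded_functions) auto

lemma det_mat_expand:
  fixes c :: "nat \<Rightarrow> nat \<Rightarrow> real" and R :: "nat \<Rightarrow> nat \<Rightarrow> nat \<Rightarrow> real"
  assumes S: "finite S"
  shows "det (mat j j (\<lambda>(a,b). \<Sum>x\<in>S. c a x * R a x b)) =
    (\<Sum>f\<in>Fs j S. (\<Prod>a\<in>{0..<j}. c a (f a)) * det (mat j j (\<lambda>(a,b). R a (f a) b)))"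
proof -
  have 1: "mat j j (\<lambda>(a,b). \<Sum>x\<in>S. c a x * R a x b) =
     mat\<^sub>r j j (\<lambda>a. finsum_vec TYPE(real) j (\<lambda>x. c a x \<cdot>\<^sub>v vec j (R a x)) S)"
    by (rule eq_matI) (auto simp: index_finsum_vec[OF S])
  have 2: "det (mat\<^sub>r j j (\<lambda>a. finsum_vec TYPE(real) j (\<lambda>x. c a x \<cdot>\<^sub>v vec j (R a x)) S)) =
     (\<Sum>f\<in>Fs j S. det (mat\<^sub>r j j (\<lambda>a. c a (f a) \<cdot>\<^sub>v vec j (R a (f a)))))"
    unfolding Fs_def
    by (rule det_linear_rows_sum[OF S]) auto
  have 3: "det (mat\<^sub>r j j (\<lambda>a. c a (f a) \<cdot>\<^sub>v vec j (R a (f a)))) =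
      (\<Prod>a\<in>{0..<j}. c a (f a)) * det (mat j j (\<lambda>(a,b). R a (f a) b))" for f
  proof -
    have "det (mat\<^sub>r j j (\<lambda>a. c a (f a) \<cdot>\<^sub>v vec j (R a (f a)))) =
      (\<Prod>a\<in>{0..<j}. c a (f a)) * det (mat\<^sub>r j j (\<lambda>a. vec j (R a (f a))))"
      by (rule det_rows_mul) auto
    moreover have "mat\<^sub>r j j (\<lambda>a. vec j (R a (f a))) = mat j j (\<lambda>(a,b). R a (f a) b)"
      by (rule eq_matI) auto
    ultimately show ?thesis by simp
  qed
  show ?thesis unfolding 1 2 3 ..
qed


definition idx :: "'a list \<Rightarrow> 'a \<Rightarrow> nat" where
  "idx xs x = (LEAST i. i < length xs \<and> xs ! i = x)"

lemma idx: "x \<in> set xs \<Longrightarrow> idx xs x < length xs \<and> xs ! idx xs x = x"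
  unfolding idx_def by (rule LeastI_ex) (simp add: in_set_conv_nth)

lemma idx_nth: "distinct xs \<Longrightarrow> i < length xs \<Longrightarrow> idx xs (xs!i) = i"
  using idx[of "xs!i" xs] nth_eq_iff_index_eq by (metis nth_mem)

lemma sorted_jsets:
  assumes "I \<in> jsets S j" "finite S"
  shows "finite I" "length (sorted_list_of_set I) = j" "distinct (sorted_list_of_set I)"
    "set (sorted_list_of_set I) = I"
proof -
  have f: "finite I" using assms unfolding jsets_def by (auto intro: finite_subset)
  then show "finite I" "length (sorted_list_of_set I) = j" "distinct (sorted_list_of_set I)"
    "set (sorted_list_of_set I) = I" using assms unfolding jsets_def by auto
qed

lemma CB:
  assumes lu: "length us = j" and lv: "length vs = j"
  shows "wedge_inner N us vs = det (mat j j (\<lambda>(a,b). ip N (us!a) (vs!b)))"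
proof -
  let ?S = "{0..N}"
  define Dv where "Dv f = det (mat j j (\<lambda>(a,b). (vs!b) (f a)))" for f :: "nat \<Rightarrow> nat"
  define h where "h f = (\<Prod>a\<in>{0..<j}. (us!a) (f a)) * Dv f" for f :: "nat \<Rightarrow> nat"
  define Finj where "Finj = {f \<in> Fs j ?S. inj_on f {0..<j}}"
  define P where "P = {p. p permutes {0..<j}}"
  define g where "g I = sorted_list_of_set I" for I :: "nat set"
  define fI where "fI I p = (\<lambda>a. if a < j then g I ! p a else a)" for I p
  have "det (mat j j (\<lambda>(a,b). ip N (us!a) (vs!b))) = (\<Sum>f\<in>Fs j ?S. h f)"
    unfolding ip_def h_def Dv_def by (rule det_mat_expand) simp
  also have "\<dots> = (\<Sum>f\<in>Finj. h f)"
  proof (rule sum.mono_neutral_right)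
    show "finite (Fs j ?S)" by (rule finite_Fs) simp
    show "Finj \<subseteq> Fs j ?S" unfolding Finj_def by auto
    show "\<forall>f\<in>Fs j ?S - Finj. h f = 0"
    proof
      fix f assume f: "f \<in> Fs j ?S - Finj"
      then obtain a1 a2 where a: "a1 < j" "a2 < j" "a1 \<noteq> a2" "f a1 = f a2"
        unfolding Finj_def inj_on_def by auto
      have "Dv f = 0" unfolding Dv_def
        by (rule det_identical_rows[OF _ a(3) a(1) a(2)]) (auto intro!: eq_vecI simp: a)
      thus "h f = 0" unfolding h_def by simp
    qed
  qed
  also have "\<dots> = (\<Sum>(I,p)\<in>Sigma (jsets ?S j) (\<lambda>_. P). h (fI I p))"
  proof (rule sum.reindex_bij_witness[where j = "\<lambda>f. (f ` {0..<j}, \<lambda>a. if a < j then idx (g (f ` {0..<j})) (f a) else a)"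
       and i = "\<lambda>(I,p). fI I p"])
    fix f assume f: "f \<in> Finj"
    let ?I = "f ` {0..<j}"
    have fS: "f ` {0..<j} \<subseteq> ?S" and inj: "inj_on f {0..<j}" and fo: "\<And>i. i \<ge> j \<Longrightarrow> f i = i"
      using f unfolding Finj_def Fs_def by auto
    have IJ: "?I \<in> jsets ?S j" unfolding jsets_def using fS card_image[OF inj] by auto
    note sj = sorted_jsets[OF IJ finite_atLeastAtMost, folded g_def]
    show eqf: "(case (?I, \<lambda>a. if a < j then idx (g ?I) (f a) else a) of (I, p) \<Rightarrow> fI I p) = f"
    proof (simp, rule ext)
      fix a show "fI ?I (\<lambda>a. if a < j then idx (g ?I) (f a) else a) a = f a"
      proof (cases "a < j")
        case True
        then have "f a \<in> set (g ?I)" by (subst sj(4)) auto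
        then show ?thesis using True by (simp add: fI_def idx)
      qed (use fo in \<open>auto simp: fI_def\<close>)
    qed
    show "(case (?I, \<lambda>a. if a < j then idx (g ?I) (f a) else a) of (I, p) \<Rightarrow> h (fI I p)) = h f"
      using eqf by simp
    have "(\<lambda>a. if a < j then idx (g ?I) (f a) else a) permutes {0..<j}"
    proof (rule inj_on_nat_permutes)
      show "inj_on (\<lambda>a. if a < j then idx (g ?I) (f a) else a) {0..<j}"
        using inj sj unfolding inj_on_def by (metis atLeastLessThan_iff image_eqI idx)
      show "(\<lambda>a. if a < j then idx (g ?I) (f a) else a) \<in> {0..<j} \<rightarrow> {0..<j}"
        using sj idx[of _ "g ?I"] by auto
    qed auto
    then show "(?I, \<lambda>a. if a < j then idx (g ?I) (f a) else a) \<in> Sigma (jsets ?S j) (\<lambda>_. P)"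
      using IJ unfolding P_def by auto
  next
    fix Ip assume Ip: "Ip \<in> Sigma (jsets ?S j) (\<lambda>_. P)"
    then obtain I p where Ip': "Ip = (I,p)" "I \<in> jsets ?S j" "p permutes {0..<j}"
      unfolding P_def by auto
    note sj = sorted_jsets[OF Ip'(2) finite_atLeastAtMost, folded g_def]
    have pj: "\<And>a. a < j \<Longrightarrow> p a < j" using permutes_in_image[OF Ip'(3)] by auto
    have po: "\<And>a. a \<ge> j \<Longrightarrow> p a = a" using Ip'(3) unfolding permutes_def by auto
    have img: "fI I p ` {0..<j} = I"
    proof -
      have "fI I p ` {0..<j} = (\<lambda>b. g I ! b) ` (p ` {0..<j})" unfolding fI_def by auto
      also have "p ` {0..<j} = {0..<j}" by (rule permutes_image[OF Ip'(3)])
      also have "(\<lambda>b. g I ! b) ` {0..<j} = set (g I)" using sj(2) by (auto simp: in_set_conv_nth image_iff) (use atLeastLessThan_iff in blast)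
      finally show ?thesis using sj by simp
    qed
    have A1: "fI I p i \<in> ?S" if "i \<in> {0..<j}" for i
      using img that Ip'(2) unfolding jsets_def by blast
    have A2: "fI I p i = i" if "i \<notin> {0..<j}" for i using that unfolding fI_def by auto
    have A3: "inj_on (fI I p) {0..<j}"
      unfolding inj_on_def fI_def using sj pj permutes_inj[OF Ip'(3)]
      by (auto simp: nth_eq_iff_index_eq inj_def)
    show "(case Ip of (I, p) \<Rightarrow> fI I p) \<in> Finj"
      unfolding Ip' Finj_def Fs_def using A1 A2 A3 by auto
    have "(\<lambda>a. if a < j then idx (g I) (fI I p a) else a) = p"
    proof
      fix a show "(if a < j then idx (g I) (fI I p a) else a) = p a"
        using pj[of a] po[of a] sj idx_nth[of "g I" "p a"] by (auto simp: fI_def)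
    qed
    then show "(\<lambda>f. (f ` {0..<j}, \<lambda>a. if a < j then idx (g (f ` {0..<j})) (f a) else a)) (case Ip of (I,p) \<Rightarrow> fI I p) = Ip"
      unfolding Ip' prod.case img by simp
  qed
  also have "\<dots> = (\<Sum>I\<in>jsets ?S j. \<Sum>p\<in>P. h (fI I p))"
  proof (rule sum.Sigma[symmetric])
    show "finite (jsets ?S j)" unfolding jsets_def
      by (rule finite_subset[of _ "Pow ?S"]) auto
    show "\<forall>I\<in>jsets ?S j. finite P" unfolding P_def using finite_permutations by auto
  qed
  also have "\<dots> = (\<Sum>I\<in>jsets ?S j. wedge_coord us I * wedge_coord vs I)"
  proof (rule sum.cong[OF refl])
    fix I assume I: "I \<in> jsets ?S j"
    note sj = sorted_jsets[OF I finite_atLeastAtMost, folded g_def]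
    define T where "T = mat j j (\<lambda>(a,b). (vs!b) (g I ! a))"
    have T: "T \<in> carrier_mat j j" unfolding T_def by simp
    have wv: "wedge_coord vs I = det T"
    proof -
      have "transpose_mat T = mat j j (\<lambda>(a,b). (vs!a) (g I ! b))"
        unfolding T_def by (rule eq_matI) auto
      then show ?thesis unfolding wedge_coord_def lv g_def[symmetric] using det_transpose[OF T] by simp
    qed
    have Dp: "Dv (fI I p) = signof p * det T" if p: "p \<in> P" for p
    proof -
      have pp: "p permutes {0..<j}" using p unfolding P_def by simp
      have pj: "\<And>a. a < j \<Longrightarrow> p a < j" using permutes_in_image[OF pp] by auto
      have "mat j j (\<lambda>(a,b). (vs!b) (fI I p a)) = mat j j (\<lambda>(a,b). T $$ (p a, b))"
        unfolding T_def fI_def by (rule eq_matI) (auto simp: pj)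
      then show ?thesis unfolding Dv_def using det_permute_rows[OF T pp] by simp
    qed
    have wu: "wedge_coord us I = (\<Sum>p\<in>P. signof p * (\<Prod>a\<in>{0..<j}. (us!a) (g I ! p a)))"
    proof -
      have "wedge_coord us I = det (mat j j (\<lambda>(a,b). (us!a) (g I ! b)))"
        unfolding wedge_coord_def lu g_def ..
      also have "\<dots> = (\<Sum>p\<in>P. signof p * (\<Prod>a\<in>{0..<j}. (us!a) (g I ! p a)))"
        unfolding det_def'[OF mat_carrier] P_def
      proof (rule sum.cong[OF refl])
        fix p assume "p \<in> {p. p permutes {0..<j}}"
        then have pj: "\<And>a. a < j \<Longrightarrow> p a < j" using permutes_in_image by fastforce
        show "signof p * (\<Prod>a = 0..<j. mat j j (\<lambda>(a, b). (us ! a) (g I ! b)) $$ (a, p a)) =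
          signof p * (\<Prod>a\<in>{0..<j}. (us!a) (g I ! p a))"
          by (rule arg_cong[where f = "\<lambda>x. signof p * x"], rule prod.cong) (auto simp: pj)
      qed
      finally show ?thesis .
    qed
    have "(\<Sum>p\<in>P. h (fI I p)) = (\<Sum>p\<in>P. signof p * (\<Prod>a\<in>{0..<j}. (us!a) (g I ! p a)) * det T)"
    proof (rule sum.cong[OF refl])
      fix p assume p: "p \<in> P"
      have "(\<Prod>a\<in>{0..<j}. (us!a) (fI I p a)) = (\<Prod>a\<in>{0..<j}. (us!a) (g I ! p a))"
        by (rule prod.cong) (auto simp: fI_def)
      then show "h (fI I p) = signof p * (\<Prod>a\<in>{0..<j}. (us!a) (g I ! p a)) * det T"
        unfolding h_def Dp[OF p] by simp
    qed
    also have "\<dots> = wedge_coord us I * wedge_coord vs I"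
      unfolding wu wv sum_distrib_right ..
    finally show "(\<Sum>p\<in>P. h (fI I p)) = wedge_coord us I * wedge_coord vs I" .
  qed
  also have "\<dots> = wedge_inner N us vs" unfolding wedge_inner_def lv ..
  finally show ?thesis ..
qed

definition G :: "nat \<Rightarrow> (nat \<Rightarrow> real) list \<Rightarrow> (nat \<Rightarrow> real) list \<Rightarrow> real" where
  "G N us vs = det (mat (length vs) (length vs) (\<lambda>(a,b). ip N (us!a) (vs!b)))"

lemma CB': "length us = length vs \<Longrightarrow> wedge_inner N us vs = G N us vs"
  unfolding G_def by (rule CB) auto

lemma G_cong:
  assumes "length us = length vs" "length us' = length vs"
    and "\<And>a t. a < length vs \<Longrightarrow> t \<le> N \<Longrightarrow> (us!a) t = (us'!a) t"
  shows "G N us vs = G N us' vs"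
proof -
  have "ip N (us!a) (vs!b) = ip N (us'!a) (vs!b)" if "a < length vs" for a b
    unfolding ip_def using assms(3)[OF that] by (intro sum.cong) auto
  then show ?thesis unfolding G_def by (intro arg_cong[where f = det] eq_matI) auto
qed

lemma G_ident:
  assumes "length us = length vs" "a < length vs" "b < length vs" "a \<noteq> b"
    and "\<And>t. t \<le> N \<Longrightarrow> (us!a) t = (us!b) t"
  shows "G N us vs = 0"
proof -
  have "ip N (us!a) v = ip N (us!b) v" for v
    unfolding ip_def using assms(5) by (intro sum.cong) auto
  then show ?thesis unfolding G_def
    using assms(2,3) by (intro det_identical_rows[OF _ assms(4) assms(2) assms(3)]) (auto intro!: eq_vecI)
qed

lemma G_swap:
  assumes "length us = length vs" "a < length vs" "b < length vs" "a \<noteq> b"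
  shows "G N (us[a := us!b, b := us!a]) vs = - G N us vs"
proof -
  let ?M = "mat (length vs) (length vs) (\<lambda>(a,b). ip N (us!a) (vs!b))"
  have "mat (length vs) (length vs) (\<lambda>(c,d). ip N ((us[a := us!b, b := us!a])!c) (vs!d)) = swaprows a b ?M"
    unfolding mat_swaprows_def using assms by (intro eq_matI) (auto simp: nth_list_update)
  then show ?thesis unfolding G_def using det_swaprows[OF assms(2,3,4), of ?M] by simp
qed

lemma G_perm:
  assumes "length us = length vs" "p permutes {..<length vs}"
  shows "G N (permute_list p us) vs = signof p * G N us vs"
proof -
  let ?M = "mat (length vs) (length vs) (\<lambda>(a,b). ip N (us!a) (vs!b))"
  have p: "p permutes {0..<length vs}" using assms(2) by (simp add: atLeast0LessThan)
  have "mat (length vs) (length vs) (\<lambda>(c,d). ip N ((permute_list p us)!c) (vs!d)) =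
     mat (length vs) (length vs) (\<lambda>(i,j). ?M $$ (p i, j))"
    using assms permutes_in_image[OF assms(2)] by (intro eq_matI) (auto simp: permute_list_nth)
  then show ?thesis unfolding G_def using det_permute_rows[OF _ p, of ?M] by simp
qed

lemma ip_sum:
  assumes "finite S" "\<And>t. t \<le> N \<Longrightarrow> u t = (\<Sum>x\<in>S. c x * h x t)"
  shows "ip N u v = (\<Sum>x\<in>S. c x * ip N (h x) v)"
proof -
  have "ip N u v = (\<Sum>t\<in>{0..N}. \<Sum>x\<in>S. c x * h x t * v t)"
    unfolding ip_def using assms(2) by (auto intro!: sum.cong simp: sum_distrib_right)
  also have "\<dots> = (\<Sum>x\<in>S. c x * ip N (h x) v)"
    unfolding ip_def by (subst sum.swap) (auto intro!: sum.cong simp: sum_distrib_left mult.assoc)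
  finally show ?thesis .
qed

lemma G_expand:
  assumes "length us = length vs" "finite S"
    and "\<And>a t. a < length vs \<Longrightarrow> t \<le> N \<Longrightarrow> (us!a) t = (\<Sum>x\<in>S. c a x * h a x t)"
  shows "G N us vs = (\<Sum>f\<in>Fs (length vs) S. (\<Prod>a\<in>{0..<length vs}. c a (f a)) *
            G N (map (\<lambda>a. h a (f a)) [0..<length vs]) vs)"
proof -
  let ?j = "length vs"
  have "mat ?j ?j (\<lambda>(a,b). ip N (us!a) (vs!b)) =
     mat ?j ?j (\<lambda>(a,b). \<Sum>x\<in>S. c a x * ip N (h a x) (vs!b))"
    using ip_sum[OF assms(2) assms(3)] by (intro eq_matI) auto
  then have "G N us vs = (\<Sum>f\<in>Fs ?j S. (\<Prod>a\<in>{0..<?j}. c a (f a)) *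
      det (mat ?j ?j (\<lambda>(a,b). ip N (h a (f a)) (vs!b))))"
    unfolding G_def using det_mat_expand[OF assms(2), of ?j c "\<lambda>a x b. ip N (h a x) (vs!b)"] by simp
  also have "\<dots> = (\<Sum>f\<in>Fs ?j S. (\<Prod>a\<in>{0..<?j}. c a (f a)) *
            G N (map (\<lambda>a. h a (f a)) [0..<?j]) vs)"
    unfolding G_def by (intro sum.cong refl arg_cong[where f = "\<lambda>x. _ * x"] arg_cong[where f = det] eq_matI) auto
  finally show ?thesis .
qed

lemma G_row:
  assumes "length us = length vs" "finite S" "a < length vs"
    and "\<And>t. t \<le> N \<Longrightarrow> (us!a) t = (\<Sum>x\<in>S. c x * h x t)"
  shows "G N us vs = (\<Sum>x\<in>S. c x * G N (us[a := h x]) vs)"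
proof -
  let ?j = "length vs"
  let ?M = "\<lambda>x. mat ?j ?j (\<lambda>(i,b). ip N ((us[a := h x])!i) (vs!b))"
  have "mat ?j ?j (\<lambda>(i,b). ip N (us!i) (vs!b)) =
     mat\<^sub>r ?j ?j (\<lambda>i. if i = a then finsum_vec TYPE(real) ?j (\<lambda>x. c x \<cdot>\<^sub>v vec ?j (\<lambda>b. ip N (h x) (vs!b))) S
        else vec ?j (\<lambda>b. ip N (us!i) (vs!b)))"
    using ip_sum[OF assms(2) assms(4)] by (intro eq_matI) (auto simp: index_finsum_vec[OF assms(2)])
  then have "G N us vs = (\<Sum>x\<in>S. det (mat\<^sub>r ?j ?j (\<lambda>i. if i = a then c x \<cdot>\<^sub>v vec ?j (\<lambda>b. ip N (h x) (vs!b))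
        else vec ?j (\<lambda>b. ip N (us!i) (vs!b)))))"
    unfolding G_def by (simp, subst det_linear_row_finsum[OF assms(2) _ assms(3)]) auto
  also have "\<dots> = (\<Sum>x\<in>S. c x * G N (us[a := h x]) vs)"
  proof (rule sum.cong[OF refl])
    fix x
    let ?cc = "\<lambda>i. if i = a then c x else 1"
    have "mat\<^sub>r ?j ?j (\<lambda>i. if i = a then c x \<cdot>\<^sub>v vec ?j (\<lambda>b. ip N (h x) (vs!b))
        else vec ?j (\<lambda>b. ip N (us!i) (vs!b))) = mat\<^sub>r ?j ?j (\<lambda>i. ?cc i \<cdot>\<^sub>v vec ?j (\<lambda>b. ip N ((us[a := h x])!i) (vs!b)))"
      using assms(1,3) by (intro eq_matI) auto
    also have "det \<dots> = prod ?cc {0..<?j} * det (mat\<^sub>r ?j ?j (\<lambda>i. vec ?j (\<lambda>b. ip N ((us[a := h x])!i) (vs!b))))"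
      by (rule det_rows_mul) auto
    also have "prod ?cc {0..<?j} = c x" using assms(3) by (simp add: prod.delta')
    also have "mat\<^sub>r ?j ?j (\<lambda>i. vec ?j (\<lambda>b. ip N ((us[a := h x])!i) (vs!b))) = ?M x"
      by (intro eq_matI) auto
    finally show "det (mat\<^sub>r ?j ?j (\<lambda>i. if i = a then c x \<cdot>\<^sub>v vec ?j (\<lambda>b. ip N (h x) (vs!b))
        else vec ?j (\<lambda>b. ip N (us!i) (vs!b)))) = c x * G N (us[a := h x]) vs"
      unfolding G_def using assms(1) by simp
  qed
  finally show ?thesis .
qed

definition xi :: "nat \<Rightarrow> nat \<Rightarrow> (nat \<Rightarrow> nat \<Rightarrow> real) \<Rightarrow> nat \<Rightarrow> nat \<Rightarrow> real" where
  "xi \<sigma> N M i = (\<lambda>t. std_basis i t + row_vec \<sigma> N M i t)"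

lemma row_vec_eval: "row_vec \<sigma> N M i t = (if \<sigma> < t \<and> t \<le> N then M i (t - Suc \<sigma>) else 0)"
proof -
  have "row_vec \<sigma> N M i t = (\<Sum>k\<in>{\<sigma>+1..N}. if t = k then M i (k - (\<sigma>+1)) else 0)"
    unfolding row_vec_def std_basis_def by (intro sum.cong) auto
  also have "\<dots> = (if \<sigma> < t \<and> t \<le> N then M i (t - Suc \<sigma>) else 0)"
    by (subst sum.delta') auto
  finally show ?thesis .
qed

lemma xi_eval: "xi \<sigma> N M i t = (if t = i then 1 else 0) + (if \<sigma> < t \<and> t \<le> N then M i (t - Suc \<sigma>) else 0)"
  unfolding xi_def row_vec_eval std_basis_def by simp

lemma finite_jsets: "finite S \<Longrightarrow> finite (jsets S j)"
  unfolding jsets_def by (rule finite_subset[of _ "Pow S"]) auto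

lemma RMc_nonneg: "RMc_norm \<sigma> N M vs \<ge> 0"
  unfolding RMc_norm_def by (auto intro!: sum_nonneg)

lemma comp_le:
  assumes i: "i \<le> \<sigma>" and J: "J \<in> jsets {1..N} m" and lv: "length vs = Suc m"
  shows "\<bar>G N (xi \<sigma> N M i # map std_basis (sorted_list_of_set J)) vs\<bar> \<le> RMc_norm \<sigma> N M vs"
proof -
  let ?f = "\<lambda>i J. (wedge_inner N ((\<lambda>t. std_basis i t + row_vec \<sigma> N M i t)
                        # map std_basis (sorted_list_of_set J)) vs)\<^sup>2"
  have fJ: "finite J" "card J = m" using J unfolding jsets_def by (auto intro: finite_subset)
  have "wedge_inner N (xi \<sigma> N M i # map std_basis (sorted_list_of_set J)) vs =
        G N (xi \<sigma> N M i # map std_basis (sorted_list_of_set J)) vs"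
    by (rule CB') (simp add: lv fJ)
  then have eq: "?f i J = (G N (xi \<sigma> N M i # map std_basis (sorted_list_of_set J)) vs)\<^sup>2"
    unfolding xi_def by simp
  have "?f i J \<le> (\<Sum>J\<in>jsets {1..N} m. ?f i J)"
    by (rule member_le_sum[OF J]) (auto intro: finite_jsets)
  also have "\<dots> \<le> (\<Sum>i\<in>{0..\<sigma>}. \<Sum>J\<in>jsets {1..N} m. ?f i J)"
    by (rule member_le_sum[where f = "\<lambda>i. \<Sum>J\<in>jsets {1..N} m. ?f i J"]) (use i in \<open>auto intro: sum_nonneg\<close>)
  finally have "sqrt (?f i J) \<le> sqrt (\<Sum>i\<in>{0..\<sigma>}. \<Sum>J\<in>jsets {1..N} m. ?f i J)"
    by (rule real_sqrt_le_mono)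
  then show ?thesis unfolding eq RMc_norm_def lv real_sqrt_abs by simp
qed

lemma L1:
  assumes i: "i \<le> \<sigma>" and lv: "length vs = Suc m" and lt: "length ts = m" and st: "set ts \<subseteq> {1..N}"
  shows "\<bar>G N (xi \<sigma> N M i # map std_basis ts) vs\<bar> \<le> RMc_norm \<sigma> N M vs"
proof (cases "distinct ts")
  case True
  let ?J = "set ts"
  let ?sl = "sorted_list_of_set ?J"
  have J: "?J \<in> jsets {1..N} m" unfolding jsets_def using st distinct_card[OF True] lt by auto
  have lsl: "length ?sl = m" using distinct_card[OF True] lt by simp
  have "mset ts = mset ?sl" using True by (simp add: sorted_list_of_set_sort_remdups distinct_remdups_id)
  then have "mset (xi \<sigma> N M i # map std_basis ts) = mset (xi \<sigma> N M i # map std_basis ?sl)"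
    by simp
  then obtain p where p: "p permutes {..<length (xi \<sigma> N M i # map std_basis ?sl)}"
    "permute_list p (xi \<sigma> N M i # map std_basis ?sl) = xi \<sigma> N M i # map std_basis ts"
    by (rule mset_eq_permutation)
  have "G N (xi \<sigma> N M i # map std_basis ts) vs = signof p * G N (xi \<sigma> N M i # map std_basis ?sl) vs"
    unfolding p(2)[symmetric] by (rule G_perm) (use p(1) lsl lv in auto)
  then have "\<bar>G N (xi \<sigma> N M i # map std_basis ts) vs\<bar> = \<bar>G N (xi \<sigma> N M i # map std_basis ?sl) vs\<bar>"
    by (simp add: abs_mult sign_def)
  also have "\<dots> \<le> RMc_norm \<sigma> N M vs" by (rule comp_le[OF i J lv])
  finally show ?thesis .
next
  case False
  then obtain a b where ab: "a < m" "b < m" "a \<noteq> b" "ts!a = ts!b"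
    using lt by (auto simp: distinct_conv_nth)
  have "G N (xi \<sigma> N M i # map std_basis ts) vs = 0"
    by (rule G_ident[of _ _ "Suc a" "Suc b"]) (use ab lt lv in auto)
  then show ?thesis using RMc_nonneg by simp
qed

definition fb :: "nat \<Rightarrow> nat \<Rightarrow> (nat \<Rightarrow> nat \<Rightarrow> real) \<Rightarrow> nat \<Rightarrow> nat \<Rightarrow> real" where
  "fb \<sigma> N M u = (if u = 0 then xi \<sigma> N M 0 else std_basis u)"

lemma map_fb_pos: "set us \<subseteq> {1..N} \<Longrightarrow> map (fb \<sigma> N M) us = map std_basis us"
  unfolding fb_def by auto

lemma B2:
  assumes lv: "length vs = Suc m" and lu: "length us = m" and su: "set us \<subseteq> {0..N}"
  shows "\<bar>G N (xi \<sigma> N M 0 # map (fb \<sigma> N M) us) vs\<bar> \<le> RMc_norm \<sigma> N M vs"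
proof (cases "0 \<in> set us")
  case True
  then obtain p where p: "p < m" "us!p = 0" using lu by (auto simp: in_set_conv_nth)
  have "G N (xi \<sigma> N M 0 # map (fb \<sigma> N M) us) vs = 0"
    by (rule G_ident[of _ _ 0 "Suc p"]) (use p lu lv in \<open>auto simp: fb_def\<close>)
  then show ?thesis using RMc_nonneg by simp
next
  case False
  have "set us \<subseteq> {1..N}"
  proof
    fix x assume "x \<in> set us"
    have "x \<le> N" using su \<open>x \<in> set us\<close> by auto
      moreover have "x \<noteq> 0" using False \<open>x \<in> set us\<close> by metis
      ultimately show "x \<in> {1..N}" by auto
  qed
  then show ?thesis unfolding map_fb_pos[OF \<open>set us \<subseteq> {1..N}\<close>]
    by (intro L1) (use lu lv in auto)
qed

definition Cm :: "nat \<Rightarrow> nat \<Rightarrow> (nat \<Rightarrow> nat \<Rightarrow> real) \<Rightarrow> real" where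
  "Cm \<sigma> N M = 1 + (\<Sum>k\<in>{0..\<sigma>}. \<Sum>u\<in>{Suc \<sigma>..N}. \<bar>M k (u - Suc \<sigma>)\<bar>)"

lemma Cm_ge1: "Cm \<sigma> N M \<ge> 1"
  unfolding Cm_def by (auto intro!: sum_nonneg)

lemma B3:
  assumes sN: "\<sigma> < N" and i: "i \<le> \<sigma>"
    and lv: "length vs = Suc m" and lu: "length us = m" and su: "set us \<subseteq> {0..N}"
  shows "\<bar>G N (xi \<sigma> N M i # map (fb \<sigma> N M) us) vs\<bar> \<le> Cm \<sigma> N M * RMc_norm \<sigma> N M vs"
proof -
  have R0: "RMc_norm \<sigma> N M vs \<ge> 0" by (rule RMc_nonneg)
  have R1: "RMc_norm \<sigma> N M vs \<le> Cm \<sigma> N M * RMc_norm \<sigma> N M vs"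
    using mult_right_mono[OF Cm_ge1 R0] by simp
  show ?thesis
  proof (cases "0 \<in> set us")
    case False
    have "set us \<subseteq> {1..N}"
    proof
      fix x assume "x \<in> set us"
      have "x \<le> N" using su \<open>x \<in> set us\<close> by auto
      moreover have "x \<noteq> 0" using False \<open>x \<in> set us\<close> by metis
      ultimately show "x \<in> {1..N}" by auto
    qed
    then have "\<bar>G N (xi \<sigma> N M i # map (fb \<sigma> N M) us) vs\<bar> \<le> RMc_norm \<sigma> N M vs"
      unfolding map_fb_pos[OF \<open>set us \<subseteq> {1..N}\<close>] by (intro L1) (use lu lv i in auto)
    then show ?thesis using R1 by linarith
  next
    case True
    then obtain p where p: "p < m" "us!p = 0" using lu by (auto simp: in_set_conv_nth)
    show ?thesis
    proof (cases "i = 0")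
      case True
      then show ?thesis using B2[OF lv lu su, of \<sigma> M] R1 by simp
    next
      case False
      let ?S = "insert i {Suc \<sigma>..N}"
      let ?c = "\<lambda>x. if x = i then 1 else M i (x - Suc \<sigma>)"
      let ?rest = "map (fb \<sigma> N M) us"
      have iS: "i \<notin> {Suc \<sigma>..N}" using i by auto
      have dec: "((xi \<sigma> N M i # ?rest) ! 0) t = (\<Sum>x\<in>?S. ?c x * std_basis x t)" for t
      proof -
        have "(\<Sum>x\<in>?S. ?c x * std_basis x t) = std_basis i t + (\<Sum>x\<in>{Suc \<sigma>..N}. M i (x - Suc \<sigma>) * std_basis x t)"
          using iS by (simp add: sum.insert) (intro sum.cong, auto)
        then show ?thesis unfolding xi_def row_vec_def by simp
      qed
      have "G N (xi \<sigma> N M i # ?rest) vs = (\<Sum>x\<in>?S. ?c x * G N ((xi \<sigma> N M i # ?rest)[0 := std_basis x]) vs)"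
        by (rule G_row) (use lu lv dec in auto)
      also have "\<dots> = (\<Sum>x\<in>?S. ?c x * G N (std_basis x # ?rest) vs)" by simp
      finally have eq: "G N (xi \<sigma> N M i # ?rest) vs = (\<Sum>x\<in>?S. ?c x * G N (std_basis x # ?rest) vs)" .
      have bnd: "\<bar>G N (std_basis x # ?rest) vs\<bar> \<le> RMc_norm \<sigma> N M vs" if x: "x \<in> ?S" for x
      proof -
        have x1: "x \<noteq> 0" "x \<le> N" using x False i sN by auto
        let ?L = "std_basis x # ?rest"
        have "?L[0 := ?L ! Suc p, Suc p := ?L ! 0] = xi \<sigma> N M 0 # map (fb \<sigma> N M) (us[p := x])"
          using p lu x1 by (simp add: fb_def map_update)
        moreover have "G N (?L[0 := ?L ! Suc p, Suc p := ?L ! 0]) vs = - G N ?L vs"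
          by (rule G_swap) (use p lu lv in auto)
        moreover have "\<bar>G N (xi \<sigma> N M 0 # map (fb \<sigma> N M) (us[p := x])) vs\<bar> \<le> RMc_norm \<sigma> N M vs"
          by (rule B2) (use lv lu su x1 p in \<open>auto dest: set_update_subset_insert[THEN subsetD]\<close>)
        ultimately show ?thesis by simp
      qed
      have "\<bar>G N (xi \<sigma> N M i # ?rest) vs\<bar> \<le> (\<Sum>x\<in>?S. \<bar>?c x\<bar> * \<bar>G N (std_basis x # ?rest) vs\<bar>)"
        unfolding eq by (rule order_trans[OF sum_abs]) (simp add: abs_mult)
      also have "\<dots> \<le> (\<Sum>x\<in>?S. \<bar>?c x\<bar> * RMc_norm \<sigma> N M vs)"
        by (intro sum_mono mult_left_mono bnd) auto
      also have "\<dots> = (\<Sum>x\<in>?S. \<bar>?c x\<bar>) * RMc_norm \<sigma> N M vs" by (simp add: sum_distrib_right)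
      also have "(\<Sum>x\<in>?S. \<bar>?c x\<bar>) = 1 + (\<Sum>u\<in>{Suc \<sigma>..N}. \<bar>M i (u - Suc \<sigma>)\<bar>)"
        using iS by (simp add: sum.insert) (intro sum.cong, auto)
      also have "\<dots> \<le> Cm \<sigma> N M"
        unfolding Cm_def using i
        using member_le_sum[where f = "\<lambda>k. \<Sum>u\<in>{Suc \<sigma>..N}. \<bar>M k (u - Suc \<sigma>)\<bar>" and i = i and A = "{0..\<sigma>}"]
        by (auto intro: sum_nonneg)
      finally show ?thesis using R0 by (simp add: mult_right_mono)
    qed
  qed
qed

definition beta :: "nat \<Rightarrow> nat \<Rightarrow> (nat \<Rightarrow> nat \<Rightarrow> real) \<Rightarrow> (nat \<Rightarrow> real) \<Rightarrow> nat \<Rightarrow> real" where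
  "beta \<sigma> N M y x = (if x = 0 then y 0 else if x \<le> \<sigma> then y x else y x - y 0 * M 0 (x - Suc \<sigma>))"

lemma decomp_fb:
  assumes sN: "\<sigma> < N" and t: "t \<le> N"
  shows "y t = (\<Sum>x\<in>{0..N}. beta \<sigma> N M y x * fb \<sigma> N M x t)"
proof -
  have "(\<Sum>x\<in>{0..N}. beta \<sigma> N M y x * fb \<sigma> N M x t) =
     beta \<sigma> N M y 0 * xi \<sigma> N M 0 t + (\<Sum>x\<in>{Suc 0..N}. beta \<sigma> N M y x * fb \<sigma> N M x t)"
    by (subst sum.atLeast_Suc_atMost) (auto simp: fb_def)
  also have "(\<Sum>x\<in>{Suc 0..N}. beta \<sigma> N M y x * fb \<sigma> N M x t) =
      (\<Sum>x\<in>{Suc 0..N}. if t = x then beta \<sigma> N M y x else 0)"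
    by (intro sum.cong) (auto simp: fb_def std_basis_def)
  also have "\<dots> = (if t \<in> {Suc 0..N} then beta \<sigma> N M y t else 0)"
    by (rule sum.delta') simp
  finally show ?thesis using t sN
    by (cases "t = 0") (auto simp: xi_eval beta_def)
qed

lemma GL:
  assumes sN: "\<sigma> < N"
  shows "\<exists>C. \<forall>vs \<alpha> ys. length vs = Suc m \<longrightarrow> length ys = m \<longrightarrow> (\<forall>k. \<bar>\<alpha> k\<bar> \<le> Y) \<longrightarrow>
     (\<forall>a<m. \<forall>u\<le>N. \<bar>(ys!a) u\<bar> \<le> Y) \<longrightarrow>
     \<bar>G N ((\<lambda>t. \<Sum>k\<in>{0..\<sigma>}. \<alpha> k * xi \<sigma> N M k t) # ys) vs\<bar> \<le> C * RMc_norm \<sigma> N M vs"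
proof -
  define Yb where "Yb = Y * (1 + (\<Sum>u\<in>{Suc \<sigma>..N}. \<bar>M 0 (u - Suc \<sigma>)\<bar>))"
  define K where "K = real (card (Fs (Suc m) {0..N})) * Yb ^ Suc m * Cm \<sigma> N M"
  show ?thesis
  proof (rule exI[of _ K], intro allI impI)
    fix vs ys :: "(nat \<Rightarrow> real) list" and \<alpha> :: "nat \<Rightarrow> real"
    assume lv: "length vs = Suc m" and ly: "length ys = m" and ha: "\<forall>k. \<bar>\<alpha> k\<bar> \<le> Y"
      and hy: "\<forall>a<m. \<forall>u\<le>N. \<bar>(ys!a) u\<bar> \<le> Y"
    have Y0: "Y \<ge> 0" using ha[rule_format, of 0] by simp
    have Ms: "(\<Sum>u\<in>{Suc \<sigma>..N}. \<bar>M 0 (u - Suc \<sigma>)\<bar>) \<ge> 0" by (auto intro: sum_nonneg)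
    have YYb: "Y \<le> Yb" unfolding Yb_def using Y0 Ms by (simp add: algebra_simps)
    have Yb0: "Yb \<ge> 0" using Y0 YYb by simp
    define c :: "nat \<Rightarrow> nat \<Rightarrow> real" where "c a x = (if a = 0 then (if x \<le> \<sigma> then \<alpha> x else 0) else beta \<sigma> N M (ys!(a-1)) x)" for a x
    define h :: "nat \<Rightarrow> nat \<Rightarrow> nat \<Rightarrow> real" where "h a x = (if a = 0 then xi \<sigma> N M x else fb \<sigma> N M x)" for a x
    define y0 where "y0 = (\<lambda>t. \<Sum>k\<in>{0..\<sigma>}. \<alpha> k * xi \<sigma> N M k t)"
    let ?us = "y0 # ys"
    let ?R = "RMc_norm \<sigma> N M vs"
    have dec: "(?us!a) t = (\<Sum>x\<in>{0..N}. c a x * h a x t)" if a: "a < length vs" and t: "t \<le> N" for a t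
    proof (cases a)
      case 0
      have "(\<Sum>x\<in>{0..N}. c a x * h a x t) = (\<Sum>x\<in>{0..\<sigma>}. \<alpha> x * xi \<sigma> N M x t)"
        by (rule sum.mono_neutral_cong_right) (use 0 sN in \<open>auto simp: c_def h_def\<close>)
      then show ?thesis using 0 by (simp add: y0_def)
    next
      case (Suc a')
      then show ?thesis using decomp_fb[OF sN t, of "ys!a'" M] by (simp add: c_def h_def)
    qed
    have "G N ?us vs = (\<Sum>f\<in>Fs (Suc m) {0..N}. (\<Prod>a\<in>{0..<Suc m}. c a (f a)) *
            G N (map (\<lambda>a. h a (f a)) [0..<Suc m]) vs)"
      using G_expand[of ?us vs "{0..N}" N c h] dec ly lv by simp
    have cb: "\<bar>c a x\<bar> \<le> Yb" if "a < Suc m" "x \<le> N" for a x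
    proof (cases a)
      case 0 then show ?thesis using ha[rule_format, of x] YYb Yb0 by (auto simp: c_def)
    next
      case (Suc a')
      let ?y = "ys!a'"
      have y: "\<And>u. u \<le> N \<Longrightarrow> \<bar>?y u\<bar> \<le> Y" using hy Suc that by auto
      show ?thesis
      proof (cases "x = 0 \<or> x \<le> \<sigma>")
        case True then show ?thesis using y[of x] y[of 0] YYb that Suc by (auto simp: c_def beta_def)
      next
        case False
        then have xs: "x \<in> {Suc \<sigma>..N}" using that by auto
        have m1: "\<bar>M 0 (x - Suc \<sigma>)\<bar> \<le> (\<Sum>u\<in>{Suc \<sigma>..N}. \<bar>M 0 (u - Suc \<sigma>)\<bar>)"
          by (rule member_le_sum[OF xs]) auto
        have "\<bar>c a x\<bar> = \<bar>?y x - ?y 0 * M 0 (x - Suc \<sigma>)\<bar>" using False Suc by (simp add: c_def beta_def)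
        also have "\<dots> \<le> \<bar>?y x\<bar> + \<bar>?y 0\<bar> * \<bar>M 0 (x - Suc \<sigma>)\<bar>" using abs_triangle_ineq4[of "?y x" "?y 0 * M 0 (x - Suc \<sigma>)"] by (simp add: abs_mult)
        also have "\<dots> \<le> Y + Y * (\<Sum>u\<in>{Suc \<sigma>..N}. \<bar>M 0 (u - Suc \<sigma>)\<bar>)"
          using y[of x] y[of 0] that m1 Y0 by (intro add_mono mult_mono) auto
        finally show ?thesis unfolding Yb_def by (simp add: algebra_simps)
      qed
    qed
    have trm: "\<bar>(\<Prod>a\<in>{0..<Suc m}. c a (f a)) * G N (map (\<lambda>a. h a (f a)) [0..<Suc m]) vs\<bar>
        \<le> Yb ^ Suc m * Cm \<sigma> N M * ?R" if f: "f \<in> Fs (Suc m) {0..N}" for f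
    proof (cases "f 0 \<le> \<sigma>")
      case False
      have "(\<Prod>a\<in>{0..<Suc m}. c a (f a)) = 0"
        by (rule prod_zero) (use False in \<open>auto simp: c_def intro!: bexI[of _ 0]\<close>)
      then have "\<bar>(\<Prod>a\<in>{0..<Suc m}. c a (f a)) * G N (map (\<lambda>a. h a (f a)) [0..<Suc m]) vs\<bar> = 0"
        by (simp only: mult_zero_left abs_zero)
      moreover have "0 \<le> Yb ^ Suc m * Cm \<sigma> N M * ?R"
        using Yb0 Cm_ge1[of \<sigma> N M] RMc_nonneg[of \<sigma> N M vs] by simp
      ultimately show ?thesis by linarith
    next
      case True
      have fN: "\<And>a. a < Suc m \<Longrightarrow> f a \<le> N" using f unfolding Fs_def by auto
      have "\<bar>\<Prod>a\<in>{0..<Suc m}. c a (f a)\<bar> = (\<Prod>a\<in>{0..<Suc m}. \<bar>c a (f a)\<bar>)" by (rule abs_prod)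
      also have "\<dots> \<le> (\<Prod>a\<in>{0..<Suc m}. Yb)" by (rule prod_mono) (use cb fN in auto)
      also have "\<dots> = Yb ^ Suc m" by simp
      finally have P: "\<bar>\<Prod>a\<in>{0..<Suc m}. c a (f a)\<bar> \<le> Yb ^ Suc m" .
      have mp: "map (\<lambda>a. h a (f a)) [0..<Suc m] = xi \<sigma> N M (f 0) # map (fb \<sigma> N M) (map (\<lambda>a. f (Suc a)) [0..<m])"
        by (simp add: h_def upt_conv_Cons map_Suc_upt[symmetric] del: upt_Suc)
      have Gb: "\<bar>G N (map (\<lambda>a. h a (f a)) [0..<Suc m]) vs\<bar> \<le> Cm \<sigma> N M * ?R"
        unfolding mp by (rule B3[OF sN True lv]) (use fN in auto)
      show ?thesis unfolding abs_mult using mult_mono[OF P Gb] Yb0 by (simp add: mult.assoc)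
    qed
    have "\<bar>G N ?us vs\<bar> \<le> (\<Sum>f\<in>Fs (Suc m) {0..N}. \<bar>(\<Prod>a\<in>{0..<Suc m}. c a (f a)) *
            G N (map (\<lambda>a. h a (f a)) [0..<Suc m]) vs\<bar>)"
      unfolding \<open>G N ?us vs = _\<close> by (rule sum_abs)
    also have "\<dots> \<le> (\<Sum>f\<in>Fs (Suc m) {0..N}. Yb ^ Suc m * Cm \<sigma> N M * ?R)"
      by (rule sum_mono) (rule trm)
    also have "\<dots> = K * ?R" unfolding K_def by simp
    finally show "\<bar>G N ((\<lambda>t. \<Sum>k\<in>{0..\<sigma>}. \<alpha> k * xi \<sigma> N M k t) # ys) vs\<bar> \<le> K * ?R"
      unfolding y0_def .
  qed
qed

lemma sorted_img:
  assumes g: "strict_mono g" and I: "finite I"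
  shows "sorted_list_of_set (g ` I) = map g (sorted_list_of_set I)"
proof (rule sorted_distinct_set_unique)
  show "sorted (map g (sorted_list_of_set I))"
    using strict_mono_mono[OF g] I by (auto simp: sorted_map monoD intro: sorted_wrt_mono_rel[of _ "(\<le>)"])
  show "distinct (map g (sorted_list_of_set I))"
    using strict_mono_imp_inj_on[OF g] I by (auto simp: distinct_map inj_on_def)
qed (use I in auto)

lemma wc_map:
  assumes I: "finite I" "card I = length vs" and lw: "length ws = length vs" and g: "strict_mono g"
    and h: "\<And>a x. a < length vs \<Longrightarrow> x \<in> I \<Longrightarrow> (ws!a) x = c * (vs!a) (g x)"
  shows "wedge_coord ws I = c ^ length vs * wedge_coord vs (g ` I)"
proof -
  let ?sl = "sorted_list_of_set I"
  have lsl: "length ?sl = length vs" using I by simp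
  have mem: "\<And>b. b < length vs \<Longrightarrow> ?sl ! b \<in> I" using I lsl by (metis nth_mem set_sorted_list_of_set)
  have "mat (length ws) (length ws) (\<lambda>(a, b). (ws ! a) (?sl ! b)) =
     c \<cdot>\<^sub>m mat (length vs) (length vs) (\<lambda>(a, b). (vs ! a) (sorted_list_of_set (g ` I) ! b))"
    unfolding sorted_img[OF g I(1)] using lw lsl I h
    by (intro eq_matI) (auto intro!: h mem)
  then show ?thesis unfolding wedge_coord_def by simp
qed

lemma jsets_Suc_sum:
  "(\<Sum>I\<in>jsets {Suc a..Suc b} j. F I) = (\<Sum>I\<in>jsets {a..b} j. F (Suc ` I))"
proof -
  have inj: "inj_on (image Suc) (jsets {a..b} j)"
    by (rule inj_onI) (simp add: inj_image_eq_iff)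
  have img: "image Suc ` jsets {a..b} j = jsets {Suc a..Suc b} j"
  proof
    show "image Suc ` jsets {a..b} j \<subseteq> jsets {Suc a..Suc b} j"
      unfolding jsets_def by (auto simp: card_image)
    show "jsets {Suc a..Suc b} j \<subseteq> image Suc ` jsets {a..b} j"
    proof
      fix J assume J: "J \<in> jsets {Suc a..Suc b} j"
      then have J1: "J \<subseteq> {Suc a..Suc b}" "card J = j" unfolding jsets_def by auto
      have eq: "J = Suc ` ((\<lambda>t. t - 1) ` J)" using J1 by (force simp: image_image)
      have "inj_on (\<lambda>t. t - 1) J"
      proof (rule inj_onI)
        fix x y assume xy: "x \<in> J" "y \<in> J" "x - 1 = y - 1"
        have "Suc a \<le> x" using J1(1) xy(1) by auto
        moreover have "Suc a \<le> y" using J1(1) xy(2) by auto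
        ultimately show "x = y" using xy(3) by linarith
      qed
      then have cj: "card ((\<lambda>t. t - 1) ` J) = j" using card_image J1(2) by metis
      have sub: "(\<lambda>t. t - 1) ` J \<subseteq> {a..b}"
      proof
        fix y assume "y \<in> (\<lambda>t. t - 1) ` J"
        then obtain x where x: "x \<in> J" "y = x - 1" by blast
        then have "Suc a \<le> x" "x \<le> Suc b" using J1(1) by auto
        then show "y \<in> {a..b}" using x(2) by (simp add: le_diff_conv2)
      qed
      have "(\<lambda>t. t - 1) ` J \<in> jsets {a..b} j" unfolding jsets_def using cj sub by simp
      then show "J \<in> image Suc ` jsets {a..b} j" using eq by blast
    qed
  qed
  show ?thesis unfolding img[symmetric] sum.reindex[OF inj] by simp
qed

lemma indep_of_proj:
  assumes "proj_norm \<sigma> N ws > 0"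
  shows "lin_indep_list ws"
  unfolding lin_indep_list_def
proof (rule allI, rule impI, rule ccontr)
  fix c :: "nat \<Rightarrow> real"
  assume h: "\<forall>k. (\<Sum>t<length ws. c t * (ws ! t) k) = 0" and nz: "\<not> (\<forall>t<length ws. c t = 0)"
  let ?j = "length ws"
  have wz: "wedge_coord ws I = 0" if I: "I \<in> jsets {\<sigma>+1..N} ?j" for I
  proof -
    let ?sl = "sorted_list_of_set I"
    let ?Mt = "mat ?j ?j (\<lambda>(a, b). (ws ! a) (?sl ! b))"
    have Mt: "transpose_mat ?Mt \<in> carrier_mat ?j ?j" by simp
    have e1: "transpose_mat ?Mt *\<^sub>v vec ?j c = 0\<^sub>v ?j"
    proof (rule eq_vecI)
      fix b assume "b < dim_vec (0\<^sub>v ?j :: real vec)"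
      then have b: "b < ?j" by simp
      have "(transpose_mat ?Mt *\<^sub>v vec ?j c) $ b = (\<Sum>a<?j. c a * (ws ! a) (?sl ! b))"
        using b by (simp add: scalar_prod_def atLeast0LessThan mult.commute)
      also have "\<dots> = 0" using h by simp
      finally show "(transpose_mat ?Mt *\<^sub>v vec ?j c) $ b = 0\<^sub>v ?j $ b" using b by simp
    qed simp
    have e2: "vec ?j c \<noteq> 0\<^sub>v ?j"
    proof
      assume "vec ?j c = 0\<^sub>v ?j"
      then have "\<And>t. t < ?j \<Longrightarrow> c t = 0" by (metis index_vec index_zero_vec(1))
      then show False using nz by blast
    qed
    have e3: "vec ?j c \<in> carrier_vec ?j" by simp
    have "\<exists>v. v \<in> carrier_vec ?j \<and> v \<noteq> 0\<^sub>v ?j \<and> transpose_mat ?Mt *\<^sub>v v = 0\<^sub>v ?j"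
      using e1 e2 e3 by blast
    then have "det (transpose_mat ?Mt) = 0"
      using det_0_iff_vec_prod_zero_field[OF Mt] by simp
    then show ?thesis unfolding wedge_coord_def using det_transpose[of ?Mt ?j] by simp
  qed
  have "proj_norm \<sigma> N ws = 0" unfolding proj_norm_def using wz by simp
  then show False using assms by simp
qed

definition psi :: "nat \<Rightarrow> nat \<Rightarrow> nat" where
  "psi r t = (if t < r then t else Suc t)"

lemma psi_strict_mono: "strict_mono (psi r)"
  unfolding strict_mono_def psi_def by auto

lemma psi_inj: "inj (psi r)"
  using strict_mono_imp_inj_on[OF psi_strict_mono] by simp

lemma psi_ne: "psi r t \<noteq> r"
  unfolding psi_def by auto

lemma psi_img:
  assumes "r \<le> Suc N"
  shows "psi r ` {0..N} = {0..Suc N} - {r}"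
proof
  show "psi r ` {0..N} \<subseteq> {0..Suc N} - {r}" using psi_ne[of r] by (auto simp: psi_def)
  show "{0..Suc N} - {r} \<subseteq> psi r ` {0..N}"
  proof
    fix x assume x: "x \<in> {0..Suc N} - {r}"
    show "x \<in> psi r ` {0..N}"
    proof (cases "x < r")
      case True
      then have "x = psi r x" "x \<in> {0..N}" using assms by (auto simp: psi_def)
      then show ?thesis by blast
    next
      case False
      then have "x = psi r (x - 1)" "x - 1 \<in> {0..N}" using x by (auto simp: psi_def)
      then show ?thesis by blast
    qed
  qed
qed

lemma ip_phi:
  assumes rN: "r \<le> N" and y0: "y' r = 0" and yy: "\<And>t. t \<le> N \<Longrightarrow> y' (psi r t) = y t"
  shows "ip (Suc N) y' v = ip N y (v \<circ> psi r)"
proof -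
  have "{0..Suc N} = insert r (psi r ` {0..N})" using psi_img[of r N] rN by auto
  then have "ip (Suc N) y' v = y' r * v r + (\<Sum>t\<in>psi r ` {0..N}. y' t * v t)"
  proof -
    have "r \<notin> psi r ` {0..N}" using psi_ne[of r] by (metis imageE)
    then show ?thesis unfolding ip_def \<open>{0..Suc N} = _\<close> by (subst sum.insert) auto
  qed
  also have "\<dots> = (\<Sum>t\<in>{0..N}. y' (psi r t) * v (psi r t))"
    using y0 by (simp add: sum.reindex inj_on_subset[OF psi_inj])
  also have "\<dots> = ip N y (v \<circ> psi r)" unfolding ip_def using yy by (intro sum.cong) auto
  finally show ?thesis .
qed

lemma G_phi:
  assumes l: "length us = length vs" "length us' = length vs" and rN: "r \<le> N"
    and h0: "\<And>a. a < length vs \<Longrightarrow> (us!a) r = 0"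
    and h1: "\<And>a t. a < length vs \<Longrightarrow> t \<le> N \<Longrightarrow> (us!a) (psi r t) = (us'!a) t"
  shows "G N us' (map (\<lambda>v. v \<circ> psi r) vs) = G (Suc N) us vs"
proof -
  have "mat (length vs) (length vs) (\<lambda>(a,b). ip N (us'!a) (map (\<lambda>v. v \<circ> psi r) vs ! b)) =
      mat (length vs) (length vs) (\<lambda>(a,b). ip (Suc N) (us!a) (vs ! b))"
    using ip_phi[OF rN h0 h1] by (intro eq_matI) auto
  then show ?thesis unfolding G_def by simp
qed

lemma RMc_xi: "RMc_norm \<sigma> N M vs = sqrt (\<Sum>i\<in>{0..\<sigma>}. \<Sum>J\<in>jsets {1..N} (length vs - 1).
      (wedge_inner N (xi \<sigma> N M i # map std_basis (sorted_list_of_set J)) vs)\<^sup>2)"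
  unfolding RMc_norm_def xi_def ..

lemma part1_frame:
  fixes A :: "nat \<Rightarrow> nat \<Rightarrow> real"
  assumes s1: "1 \<le> s" and sn: "s < n" and rs: "r \<le> s" and j1: "1 \<le> j"
    and vs: "vs \<in> int_frames n j" and pp: "proj_norm s n vs > 0"
    and A': "A' = (\<lambda>i c. A (if i < r then i else i + 1) c)"
  shows "map (\<lambda>v. v \<circ> psi r) vs \<in> int_frames (n - 1) j
    \<and> proj_norm (s - 1) (n - 1) (map (\<lambda>v. v \<circ> psi r) vs) = proj_norm s n vs
    \<and> RMc_norm (s - 1) (n - 1) A' (map (\<lambda>v. v \<circ> psi r) vs) \<le> RMc_norm s n A vs"
proof -
  let ?ws = "map (\<lambda>v. v \<circ> psi r) vs"
  have lv: "length vs = j" using vs unfolding int_frames_def by simp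
  have nS: "n = Suc (n - 1)" using sn by simp
  have ss: "s - 1 + 1 = s" using s1 by simp
  have wc: "wedge_coord ?ws I = wedge_coord vs (Suc ` I)" if I: "I \<in> jsets {s..n-1} j" for I
  proof -
    have fI: "finite I" "card I = length vs" using I lv unfolding jsets_def by (auto intro: finite_subset)
    have "wedge_coord ?ws I = 1 ^ length vs * wedge_coord vs (Suc ` I)"
    proof (rule wc_map[OF fI])
      show "strict_mono Suc" by (simp add: strict_mono_def)
      fix a x assume "a < length vs" "x \<in> I"
      moreover then have "x \<ge> r" using I rs unfolding jsets_def by auto
      ultimately show "(?ws ! a) x = 1 * (vs ! a) (Suc x)" by (simp add: psi_def)
    qed simp
    then show ?thesis by simp
  qed
  have proj: "proj_norm (s - 1) (n - 1) ?ws = proj_norm s n vs"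
  proof -
    have "proj_norm s n vs = sqrt (\<Sum>I\<in>jsets {Suc s..Suc (n-1)} j. (wedge_coord vs I)\<^sup>2)"
      unfolding proj_norm_def lv using nS by simp
    also have "\<dots> = sqrt (\<Sum>I\<in>jsets {s..n-1} j. (wedge_coord vs (Suc ` I))\<^sup>2)"
      by (simp only: jsets_Suc_sum)
    also have "\<dots> = proj_norm (s - 1) (n - 1) ?ws"
      unfolding proj_norm_def ss using wc lv by (simp cong: sum.cong)
    finally show ?thesis ..
  qed
  have frame: "?ws \<in> int_frames (n - 1) j"
  proof -
    have "lin_indep_list ?ws" by (rule indep_of_proj[of "s - 1" "n - 1"]) (use proj pp in simp)
    moreover have "\<forall>v\<in>set ?ws. (\<forall>k. v k \<in> \<int>) \<and> (\<forall>k>n - 1. v k = 0)"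
    proof
      fix w assume "w \<in> set ?ws"
      then obtain v where v: "v \<in> set vs" "w = v \<circ> psi r" by auto
      have "\<forall>k. v k \<in> \<int>" "\<forall>k>n. v k = 0" using vs v(1) unfolding int_frames_def by auto
      moreover have "psi r k > n" if "k > n - 1" for k using that rs sn by (auto simp: psi_def)
      ultimately show "(\<forall>k. w k \<in> \<int>) \<and> (\<forall>k>n - 1. w k = 0)" using v(2) by auto
    qed
    ultimately show ?thesis using lv unfolding int_frames_def by simp
  qed
  let ?tA = "\<lambda>i J. (wedge_inner n (xi s n A i # map std_basis (sorted_list_of_set J)) vs)\<^sup>2"
  have term_eq: "(wedge_inner (n-1) (xi (s-1) (n-1) A' i # map std_basis (sorted_list_of_set J)) ?ws)\<^sup>2
      = ?tA (psi r i) (psi r ` J)" if i: "i \<in> {0..s-1}" and J: "J \<in> jsets {1..n-1} (j - 1)" for i J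
  proof -
    have fJ: "finite J" "card J = j - 1" using J unfolding jsets_def by (auto intro: finite_subset)
    let ?us' = "xi (s-1) (n-1) A' i # map std_basis (sorted_list_of_set J)"
    let ?us = "xi s n A (psi r i) # map std_basis (map (psi r) (sorted_list_of_set J))"
    have l1: "length ?us' = length vs" "length ?us = length vs" using fJ lv j1 by auto
    have "wedge_inner (n-1) ?us' ?ws = G (n-1) ?us' ?ws" by (rule CB') (use l1 in simp)
    also have "\<dots> = G (Suc (n-1)) ?us vs"
    proof (rule G_phi[OF l1(2) l1(1)])
      show "r \<le> n - 1" using rs sn by simp
      fix a assume a: "a < length vs"
      show "(?us ! a) r = 0"
      proof (cases a)
        case 0 then show ?thesis using psi_ne[of r i] rs by (simp add: xi_eval)
      next
        case (Suc b) then show ?thesis using a l1 psi_ne[of r] by (simp add: std_basis_def) metis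
      qed
      fix t assume t: "t \<le> n - 1"
      show "(?us ! a) (psi r t) = (?us' ! a) t"
      proof (cases a)
        case 0
        have "xi s n A (psi r i) (psi r t) = xi (s-1) (n-1) A' i t"
          unfolding xi_eval A' using t s1 sn rs i by (auto simp: psi_def)
        then show ?thesis using 0 by simp
      next
        case (Suc b)
        then have "b < length (sorted_list_of_set J)" using a l1 by simp
        then show ?thesis using Suc inj_eq[OF psi_inj] by (simp add: std_basis_def)
      qed
    qed
    also have "\<dots> = wedge_inner n (xi s n A (psi r i) # map std_basis (sorted_list_of_set (psi r ` J))) vs"
      using CB'[of ?us vs n] l1 nS by (simp add: sorted_img[OF psi_strict_mono fJ(1)])
    finally show ?thesis by simp
  qed
  have jsub: "image (psi r) ` jsets {1..n-1} (j-1) \<subseteq> jsets {1..n} (j-1)"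
  proof
    fix J' assume "J' \<in> image (psi r) ` jsets {1..n-1} (j-1)"
    then obtain J where J: "J \<in> jsets {1..n-1} (j-1)" "J' = psi r ` J" by auto
    have "card J' = j - 1" using J card_image[OF inj_on_subset[OF psi_inj]] unfolding jsets_def by auto
    moreover have "J' \<subseteq> {1..n}"
    proof
      fix y assume "y \<in> J'"
      then obtain x where x: "x \<in> J" "y = psi r x" using J(2) by auto
      then have "1 \<le> x" "x \<le> n - 1" using J(1) unfolding jsets_def by auto
      then show "y \<in> {1..n}" using x(2) sn by (auto simp: psi_def)
    qed
    ultimately show "J' \<in> jsets {1..n} (j-1)" unfolding jsets_def by simp
  qed
  have inner: "(\<Sum>J\<in>jsets {1..n-1} (j-1). ?tA i (psi r ` J)) \<le> (\<Sum>J\<in>jsets {1..n} (j-1). ?tA i J)" for i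
  proof -
    have "(\<Sum>J\<in>jsets {1..n-1} (j-1). ?tA i (psi r ` J)) = (\<Sum>J\<in>image (psi r) ` jsets {1..n-1} (j-1). ?tA i J)"
      by (subst sum.reindex) (auto simp: inj_on_def inj_image_eq_iff[OF psi_inj])
    also have "\<dots> \<le> (\<Sum>J\<in>jsets {1..n} (j-1). ?tA i J)"
      by (rule sum_mono2[OF finite_jsets jsub]) auto
    finally show ?thesis .
  qed
  have "RMc_norm (s - 1) (n - 1) A' ?ws = sqrt (\<Sum>i\<in>{0..s-1}. \<Sum>J\<in>jsets {1..n-1} (j-1). ?tA (psi r i) (psi r ` J))"
    unfolding RMc_xi length_map lv
    by (intro arg_cong[where f = sqrt] sum.cong refl) (rule term_eq, auto)
  also have "\<dots> \<le> sqrt (\<Sum>i\<in>{0..s-1}. \<Sum>J\<in>jsets {1..n} (j-1). ?tA (psi r i) J)"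
    by (intro real_sqrt_le_mono sum_mono inner)
  also have "(\<Sum>i\<in>{0..s-1}. \<Sum>J\<in>jsets {1..n} (j-1). ?tA (psi r i) J) =
      (\<Sum>i\<in>psi r ` {0..s-1}. \<Sum>J\<in>jsets {1..n} (j-1). ?tA i J)"
    by (rule sum.reindex[symmetric, unfolded o_def]) (rule inj_on_subset[OF psi_inj], simp)
  also have "\<dots> \<le> (\<Sum>i\<in>{0..s}. \<Sum>J\<in>jsets {1..n} (j-1). ?tA i J)"
    by (rule sum_mono2) (use rs s1 in \<open>auto simp: psi_def intro: sum_nonneg\<close>)
  finally have X: "RMc_norm (s - 1) (n - 1) A' ?ws \<le> sqrt (\<Sum>i\<in>{0..s}. \<Sum>J\<in>jsets {1..n} (j-1). ?tA i J)"
    by (simp add: real_sqrt_le_mono comp_def)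
  have "RMc_norm (s - 1) (n - 1) A' ?ws \<le> RMc_norm s n A vs"
    unfolding RMc_xi[of s n A vs] lv by (rule X)
  then show ?thesis using frame proj by simp
qed

lemma common_denom:
  assumes "finite S" "\<forall>k\<in>S. q k \<in> \<rat>"
  shows "\<exists>D::nat. D > 0 \<and> (\<forall>k\<in>S. real D * q k \<in> \<int>)"
  using assms
proof (induction S rule: finite_induct)
  case empty
  then show ?case by (intro exI[of _ 1]) auto
next
  case (insert x F)
  then obtain D :: nat where D: "D > 0" "\<forall>k\<in>F. real D * q k \<in> \<int>" by auto
  have "q x \<in> \<rat>" using insert by auto
  then obtain a b where ab: "b > 0" "q x = of_int a / of_int b" by (rule Rats_cases') auto
  let ?D = "D * nat b"
  have e: "real (nat b) = of_int b" using ab by simp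
  have e2: "real (nat b) * q x = of_int a" using ab(1) unfolding ab(2) e by simp
  have "real ?D * q x = real D * (real (nat b) * q x)" by simp
  also have "\<dots> = real D * of_int a" by (simp only: e2)
  finally have e3: "real ?D * q x = real D * of_int a" .
  have 1: "real ?D * q x \<in> \<int>" unfolding e3 by (intro Ints_mult) auto
  have 2: "real ?D * q k \<in> \<int>" if "k \<in> F" for k
  proof -
    have e4: "real ?D * q k = (real D * q k) * of_int b" using e by simp
    show ?thesis unfolding e4 by (rule Ints_mult) (use D(2) that in auto)
  qed
  show ?case using D ab 1 2 by (intro exI[of _ ?D]) auto
qed

definition kap :: "nat \<Rightarrow> nat \<Rightarrow> nat" where
  "kap r t = (if t < r then t else t - 1)"

lemma kap_psi[simp]: "kap r (psi r u) = u"
  unfolding kap_def psi_def by auto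

lemma psi_kap: "t \<noteq> r \<Longrightarrow> psi r (kap r t) = t"
  unfolding kap_def psi_def by auto

definition Lam :: "nat \<Rightarrow> nat \<Rightarrow> nat \<Rightarrow> (nat \<Rightarrow> real) \<Rightarrow> (nat \<Rightarrow> real) \<Rightarrow> nat \<Rightarrow> real" where
  "Lam D r s q v = (\<lambda>t. real D * (if t = r then (\<Sum>k\<in>{0..s}-{r}. q k * v (kap r k)) else v (kap r t)))"

definition lamT :: "nat \<Rightarrow> nat \<Rightarrow> (nat \<Rightarrow> real) \<Rightarrow> (nat \<Rightarrow> real) \<Rightarrow> nat \<Rightarrow> real" where
  "lamT r s q y = (\<lambda>u. y (psi r u) + (if u < s then y r * q (psi r u) else 0))"

lemma Lam_psi: "Lam D r s q v (psi r u) = real D * v u"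
  unfolding Lam_def using psi_ne[of r u] by simp

lemma ip_Lam:
  assumes rs: "r \<le> s" and s1: "1 \<le> s" and sN: "s \<le> N"
  shows "ip (Suc N) y (Lam D r s q v) = real D * ip N (lamT r s q y) v"
proof -
  have rN: "r \<le> Suc N" using rs sN by simp
  have K: "{0..s} - {r} = psi r ` {0..s-1}" using psi_img[of r "s-1"] rs s1 by simp
  have nr: "r \<notin> psi r ` {0..N}" using psi_ne[of r] by (metis imageE)
  have seq: "{0..Suc N} = insert r (psi r ` {0..N})" using psi_img[OF rN] rN by auto
  have "ip (Suc N) y (Lam D r s q v) = (\<Sum>t\<in>insert r (psi r ` {0..N}). y t * Lam D r s q v t)"
    unfolding ip_def seq ..
  also have "\<dots> = y r * Lam D r s q v r + (\<Sum>t\<in>psi r ` {0..N}. y t * Lam D r s q v t)"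
    using nr by (subst sum.insert) auto
  also have "(\<Sum>t\<in>psi r ` {0..N}. y t * Lam D r s q v t) = real D * (\<Sum>u\<in>{0..N}. y (psi r u) * v u)"
    by (simp add: sum.reindex inj_on_subset[OF psi_inj] Lam_psi algebra_simps sum_distrib_left)
  also have "Lam D r s q v r = real D * (\<Sum>u\<in>{0..s-1}. q (psi r u) * v u)"
    unfolding Lam_def K by (simp add: sum.reindex inj_on_subset[OF psi_inj])
  also have "(\<Sum>u\<in>{0..s-1}. q (psi r u) * v u) = (\<Sum>u\<in>{0..N}. (if u < s then q (psi r u) * v u else 0))"
    by (rule sum.mono_neutral_cong_left) (use s1 sN in auto)
  also have "ip N (lamT r s q y) v = (\<Sum>u\<in>{0..N}. y (psi r u) * v u) +
      y r * (\<Sum>u\<in>{0..N}. (if u < s then q (psi r u) * v u else 0))"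
    unfolding ip_def lamT_def distrib_right sum.distrib sum_distrib_left
    by (intro arg_cong2[where f = "(+)"] sum.cong) auto
  ultimately show ?thesis by (simp add: algebra_simps)
qed

lemma G_Lam:
  assumes l: "length us = length vs" and rs: "r \<le> s" and s1: "1 \<le> s" and sN: "s \<le> N"
  shows "G (Suc N) us (map (Lam D r s q) vs) = real D ^ length vs * G N (map (lamT r s q) us) vs"
proof -
  have "mat (length vs) (length vs) (\<lambda>(a,b). ip (Suc N) (us!a) (map (Lam D r s q) vs ! b)) =
      real D \<cdot>\<^sub>m mat (length vs) (length vs) (\<lambda>(a,b). ip N (map (lamT r s q) us ! a) (vs ! b))"
    using l ip_Lam[OF rs s1 sN] by (intro eq_matI) auto
  then show ?thesis unfolding G_def by simp
qed

definition alpha :: "nat \<Rightarrow> nat \<Rightarrow> (nat \<Rightarrow> real) \<Rightarrow> nat \<Rightarrow> nat \<Rightarrow> real" where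
  "alpha r s q i k = (if i = r then (if k \<le> s - 1 then q (psi r k) else 0) else (if k = kap r i then 1 else 0))"

lemma row_ne:
  fixes A :: "nat \<Rightarrow> nat \<Rightarrow> real"
  assumes s1: "1 \<le> s" and rs: "r \<le> s" and sN: "s \<le> N" and i: "i \<le> s" "i \<noteq> r" and u: "u \<le> N"
    and A': "A' = (\<lambda>i c. A (if i < r then i else i + 1) c)"
  shows "lamT r s q (xi s (Suc N) A i) u = (\<Sum>k\<in>{0..s-1}. alpha r s q i k * xi (s-1) N A' k u)"
proof -
  have ki: "kap r i \<in> {0..s-1}" using i rs unfolding kap_def by auto
  have "(\<Sum>k\<in>{0..s-1}. alpha r s q i k * xi (s-1) N A' k u) =
      (\<Sum>k\<in>{0..s-1}. if kap r i = k then xi (s-1) N A' k u else 0)"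
    by (rule sum.cong) (use i in \<open>auto simp: alpha_def\<close>)
  also have "\<dots> = xi (s-1) N A' (kap r i) u" using ki by (subst sum.delta') auto
  also have "\<dots> = lamT r s q (xi s (Suc N) A i) u"
    unfolding lamT_def xi_eval A' using i rs s1 sN u
    by (auto simp: psi_def kap_def)
  finally show ?thesis ..
qed

lemma row_eq:
  fixes A :: "nat \<Rightarrow> nat \<Rightarrow> real"
  assumes s1: "1 \<le> s" and rs: "r \<le> s" and sN: "s \<le> N" and u: "u \<le> N"
    and A': "A' = (\<lambda>i c. A (if i < r then i else i + 1) c)"
    and hq: "\<forall>c<Suc N - s. A r c = (\<Sum>i\<in>{0..s}-{r}. q i * A i c)"
  shows "lamT r s q (xi s (Suc N) A r) u = (\<Sum>k\<in>{0..s-1}. alpha r s q r k * xi (s-1) N A' k u)"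
proof -
  have K: "{0..s} - {r} = psi r ` {0..s-1}" using psi_img[of r "s-1"] rs s1 by simp
  have "(\<Sum>k\<in>{0..s-1}. alpha r s q r k * xi (s-1) N A' k u) =
      (\<Sum>k\<in>{0..s-1}. (if u = k then q (psi r k) else 0)) +
      (\<Sum>k\<in>{0..s-1}. (if s - 1 < u \<and> u \<le> N then q (psi r k) * A (psi r k) (u - s) else 0))"
    unfolding sum.distrib[symmetric] xi_eval A'
    by (rule sum.cong) (use s1 in \<open>auto simp: alpha_def psi_def\<close>)
  also have "(\<Sum>k\<in>{0..s-1}. (if u = k then q (psi r k) else 0)) = (if u < s then q (psi r u) else 0)"
    by (subst sum.delta') (use s1 in auto)
  also have "(\<Sum>k\<in>{0..s-1}. (if s - 1 < u \<and> u \<le> N then q (psi r k) * A (psi r k) (u - s) else 0)) =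
      (if s \<le> u then A r (u - s) else 0)"
  proof (cases "s \<le> u")
    case True
    have "A r (u - s) = (\<Sum>i\<in>{0..s}-{r}. q i * A i (u - s))" using hq True u by auto
    also have "\<dots> = (\<Sum>k\<in>{0..s-1}. q (psi r k) * A (psi r k) (u - s))"
      unfolding K by (simp add: sum.reindex inj_on_subset[OF psi_inj])
    moreover have "s - 1 < u" using True s1 by simp
    ultimately show ?thesis using True u s1 by simp
  next
    case False
    then have "\<not> (s - 1 < u)" using s1 by simp
    then show ?thesis using False by simp
  qed
  also have "lamT r s q (xi s (Suc N) A r) u = (if u < s then q (psi r u) else 0) + (if s \<le> u then A r (u - s) else 0)"
    unfolding lamT_def xi_eval using rs s1 sN u psi_ne[of r u]
    by (auto simp: psi_def)
  ultimately show ?thesis by simp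
qed

lemma alpha_bound:
  assumes s1: "1 \<le> s"
  shows "\<bar>alpha r s q i k\<bar> \<le> 1 + (\<Sum>k\<in>{0..s}. \<bar>q k\<bar>)"
proof -
  have S: "0 \<le> (\<Sum>k\<in>{0..s}. \<bar>q k\<bar>)" by (auto intro: sum_nonneg)
  show ?thesis
  proof (cases "i = r \<and> k \<le> s - 1")
    case True
    have "psi r k \<in> {0..s}" using True s1 by (auto simp: psi_def)
    then have "\<bar>q (psi r k)\<bar> \<le> (\<Sum>k\<in>{0..s}. \<bar>q k\<bar>)" by (rule member_le_sum) auto
    then show ?thesis using True by (simp add: alpha_def)
  qed (use S in \<open>auto simp: alpha_def\<close>)
qed

lemma lamT_E_bound:
  assumes "u \<le> N"
  shows "\<bar>lamT r s q (std_basis t) u\<bar> \<le> 1 + (\<Sum>k\<in>{0..s}. \<bar>q k\<bar>)"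
proof -
  have S: "0 \<le> (\<Sum>k\<in>{0..s}. \<bar>q k\<bar>)" by (auto intro: sum_nonneg)
  have qb: "\<bar>q (psi r u)\<bar> \<le> (\<Sum>k\<in>{0..s}. \<bar>q k\<bar>)" if "u < s"
  proof -
    have "psi r u \<in> {0..s}" using that by (auto simp: psi_def)
    then show ?thesis by (rule member_le_sum) auto
  qed
  show ?thesis unfolding lamT_def std_basis_def using S qb by auto
qed

lemma part2_frame:
  fixes A :: "nat \<Rightarrow> nat \<Rightarrow> real" and q :: "nat \<Rightarrow> real"
  assumes s1: "1 \<le> s" and sn: "s < n" and rs: "r \<le> s" and j1: "1 \<le> j"
    and A': "A' = (\<lambda>i c. A (if i < r then i else i + 1) c)"
    and qQ: "\<forall>i. q i \<in> \<rat>" and hq: "\<forall>c<n-s. A r c = (\<Sum>i\<in>{0..s}-{r}. q i * A i c)"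
  shows "\<exists>cc K. cc \<ge> 1 \<and> K \<ge> 0 \<and> (\<forall>vs'\<in>int_frames (n-1) j. \<exists>vs\<in>int_frames n j.
     proj_norm s n vs = cc * proj_norm (s-1) (n-1) vs' \<and> RMc_norm s n A vs \<le> K * RMc_norm (s-1) (n-1) A' vs')"
proof -
  obtain N where nN: "n = Suc N" using sn by (cases n) auto
  have sN: "s \<le> N" using sn nN by simp
  have hq': "\<forall>c<Suc N - s. A r c = (\<Sum>i\<in>{0..s}-{r}. q i * A i c)" using hq nN by simp
  obtain D :: nat where D: "D > 0" "\<forall>k\<in>{0..s}-{r}. real D * q k \<in> \<int>"
    using common_denom[of "{0..s}-{r}" q] qQ by auto
  define Y where "Y = 1 + (\<Sum>k\<in>{0..s}. \<bar>q k\<bar>)"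
  have sN1: "s - 1 < N" using s1 sN by simp
  from GL[OF sN1, of "j-1" Y A'] obtain C where C: "\<forall>vs \<alpha> ys. length vs = Suc (j-1) \<longrightarrow> length ys = j-1 \<longrightarrow>
     (\<forall>k. \<bar>\<alpha> k\<bar> \<le> Y) \<longrightarrow> (\<forall>a<j-1. \<forall>u\<le>N. \<bar>(ys!a) u\<bar> \<le> Y) \<longrightarrow>
     \<bar>G N ((\<lambda>t. \<Sum>k\<in>{0..s-1}. \<alpha> k * xi (s-1) N A' k t) # ys) vs\<bar> \<le> C * RMc_norm (s-1) N A' vs"
    by blast
  define cc where "cc = real D ^ j"
  define K where "K = sqrt (real (card {0..s} * card (jsets {1..n} (j-1)))) * cc * \<bar>C\<bar>"
  have cc1: "1 \<le> cc" using D unfolding cc_def by (simp add: one_le_power)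
  show ?thesis
  proof (rule exI[of _ cc], rule exI[of _ K], intro conjI ballI)
    show "1 \<le> cc" by (rule cc1)
    show "0 \<le> K" using cc1 by (simp add: K_def)
    fix vs' assume vs': "vs' \<in> int_frames (n-1) j"
    let ?L = "Lam D r s q"
    let ?vs = "map ?L vs'"
    have lv: "length vs' = j" and vint: "\<forall>v\<in>set vs'. (\<forall>k. v k \<in> \<int>) \<and> (\<forall>k>N. v k = 0)"
      and vind: "lin_indep_list vs'"
      using vs' nN unfolding int_frames_def by auto
    have frame: "?vs \<in> int_frames n j"
    proof -
      have ints: "(\<forall>k. w k \<in> \<int>) \<and> (\<forall>k>n. w k = 0)" if w: "w \<in> set ?vs" for w
      proof -
        obtain v where v: "v \<in> set vs'" "w = ?L v" using w by auto
        have vi: "\<And>k. v k \<in> \<int>" "\<And>k. k > N \<Longrightarrow> v k = 0" using vint v(1) by auto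
        have "w k \<in> \<int>" for k
        proof (cases "k = r")
          case True
          have "(\<Sum>k\<in>{0..s}-{r}. q k * v (kap r k)) * real D = (\<Sum>k\<in>{0..s}-{r}. (real D * q k) * v (kap r k))"
            unfolding sum_distrib_right by (simp add: mult_ac)
          also have "\<dots> \<in> \<int>" by (intro Ints_sum, rule Ints_mult) (use D(2) vi(1) in auto)
          finally show ?thesis using True v(2) by (simp add: Lam_def mult.commute sum_distrib_left)
        next
          case False
          then show ?thesis using v(2) vi(1) by (simp add: Lam_def)
        qed
        moreover have "w k = 0" if "k > n" for k
        proof -
          have "k \<noteq> r" "kap r k > N" using that rs sn nN by (auto simp: kap_def)
          then show ?thesis using v(2) vi(2) by (simp add: Lam_def)
        qed
        ultimately show ?thesis by blast
      qed
      have ind: "lin_indep_list ?vs"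
        unfolding lin_indep_list_def
      proof (intro allI impI)
        fix c :: "nat \<Rightarrow> real" and t
        assume h: "\<forall>k. (\<Sum>t<length ?vs. c t * (?vs ! t) k) = 0" and t: "t < length ?vs"
        have "\<forall>k. (\<Sum>t<length vs'. c t * (vs' ! t) k) = 0"
        proof
          fix k
          have "real D * (\<Sum>t<length vs'. c t * (vs' ! t) k) = (\<Sum>t<length ?vs. c t * (?vs ! t) (psi r k))"
            by (simp add: sum_distrib_left Lam_psi algebra_simps)
          then show "(\<Sum>t<length vs'. c t * (vs' ! t) k) = 0" using h D(1) by simp
        qed
        then show "c t = 0" using vind t unfolding lin_indep_list_def by simp
      qed
      show ?thesis unfolding int_frames_def using lv ints ind by auto
    qed
    have wc: "wedge_coord ?vs (Suc ` I) = cc * wedge_coord vs' I" if I: "I \<in> jsets {s..N} j" for I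
    proof -
      have fI: "finite I" "card I = length vs'" using I lv unfolding jsets_def by (auto intro: finite_subset)
      let ?ws = "map (\<lambda>v. ?L v \<circ> Suc) vs'"
      have e1: "wedge_coord ?ws I = 1 ^ length ?vs * wedge_coord ?vs (Suc ` I)"
        by (rule wc_map) (use fI in \<open>auto simp: strict_mono_def\<close>)
      have e2: "wedge_coord ?ws I = real D ^ length vs' * wedge_coord vs' (id ` I)"
      proof (rule wc_map[OF fI])
        fix a x assume a: "a < length vs'" and x: "x \<in> I"
        then have "x \<ge> r" using I rs unfolding jsets_def by auto
        then have "Suc x \<noteq> r" "kap r (Suc x) = x" by (auto simp: kap_def)
        then show "(?ws ! a) x = real D * (vs' ! a) (id x)" using a by (simp add: Lam_def)
      qed (auto simp: strict_mono_def)
      show ?thesis using e1 e2 lv by (simp add: cc_def)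
    qed
    have proj: "proj_norm s n ?vs = cc * proj_norm (s-1) (n-1) vs'"
    proof -
      have "proj_norm s n ?vs = sqrt (\<Sum>I\<in>jsets {Suc s..Suc N} j. (wedge_coord ?vs I)\<^sup>2)"
        unfolding proj_norm_def using lv nN by simp
      also have "\<dots> = sqrt (\<Sum>I\<in>jsets {s..N} j. (wedge_coord ?vs (Suc ` I))\<^sup>2)"
        by (simp only: jsets_Suc_sum)
      also have "\<dots> = sqrt (cc\<^sup>2 * (\<Sum>I\<in>jsets {s..N} j. (wedge_coord vs' I)\<^sup>2))"
        using wc by (simp add: sum_distrib_left power_mult_distrib)
      also have "\<dots> = cc * proj_norm (s-1) (n-1) vs'"
        unfolding proj_norm_def real_sqrt_mult using cc1 s1 nN lv by simp
      finally show ?thesis .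
    qed
    let ?R' = "RMc_norm (s-1) (n-1) A' vs'"
    have R0: "?R' \<ge> 0" by (rule RMc_nonneg)
    have comp: "\<bar>wedge_inner n (xi s n A i # map std_basis (sorted_list_of_set J)) ?vs\<bar> \<le> cc * \<bar>C\<bar> * ?R'"
      if i: "i \<in> {0..s}" and J: "J \<in> jsets {1..n} (j-1)" for i J
    proof -
      have fJ: "finite J" "card J = j - 1" using J unfolding jsets_def by (auto intro: finite_subset)
      let ?sl = "sorted_list_of_set J"
      let ?us = "xi s n A i # map std_basis ?sl"
      let ?rest = "map (lamT r s q) (map std_basis ?sl)"
      have lus: "length ?us = length vs'" using fJ lv j1 by simp
      have "wedge_inner n ?us ?vs = G n ?us ?vs" by (rule CB') (use lus in simp)
      also have "\<dots> = real D ^ length vs' * G N (map (lamT r s q) ?us) vs'"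
        unfolding nN by (rule G_Lam[OF _ rs s1 sN]) (use lus nN in simp)
      also have "G N (map (lamT r s q) ?us) vs' =
          G N ((\<lambda>t. \<Sum>k\<in>{0..s-1}. alpha r s q i k * xi (s-1) N A' k t) # ?rest) vs'"
      proof (rule G_cong)
        fix a t assume a: "a < length vs'" and t: "t \<le> N"
        show "(map (lamT r s q) ?us ! a) t = (((\<lambda>t. \<Sum>k\<in>{0..s-1}. alpha r s q i k * xi (s-1) N A' k t) # ?rest) ! a) t"
        proof (cases a)
          case 0
          then show ?thesis
          proof (cases "i = r")
            case True
            then show ?thesis using 0 row_eq[OF s1 rs sN t A' hq'] nN by simp
          next
            case False
            then show ?thesis using 0 row_ne[OF s1 rs sN _ False t A'] i nN by simp
          qed
        qed simp
      qed (use lus in simp_all)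
      finally have eq: "wedge_inner n ?us ?vs = cc * G N ((\<lambda>t. \<Sum>k\<in>{0..s-1}. alpha r s q i k * xi (s-1) N A' k t) # ?rest) vs'"
        using lv by (simp add: cc_def)
      have "\<bar>G N ((\<lambda>t. \<Sum>k\<in>{0..s-1}. alpha r s q i k * xi (s-1) N A' k t) # ?rest) vs'\<bar> \<le> C * RMc_norm (s-1) N A' vs'"
      proof (rule C[rule_format])
        show "length vs' = Suc (j - 1)" using lv j1 by simp
        show "length ?rest = j - 1" using fJ by simp
        show "\<bar>alpha r s q i k\<bar> \<le> Y" for k unfolding Y_def by (rule alpha_bound[OF s1])
        show "\<bar>(?rest ! a) u\<bar> \<le> Y" if "a < j - 1" "u \<le> N" for a u
          using that fJ lamT_E_bound[OF that(2)] unfolding Y_def by simp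
      qed
      also have "\<dots> \<le> \<bar>C\<bar> * ?R'" using R0 nN by (simp add: mult_right_mono)
      finally show ?thesis unfolding eq abs_mult using cc1 by (simp add: mult.assoc mult_left_mono)
    qed
    let ?T = "\<lambda>i J. (wedge_inner n (xi s n A i # map std_basis (sorted_list_of_set J)) ?vs)\<^sup>2"
    have "(\<Sum>i\<in>{0..s}. \<Sum>J\<in>jsets {1..n} (j-1). ?T i J) \<le> (\<Sum>i\<in>{0..s}. \<Sum>J\<in>jsets {1..n} (j-1). (cc * \<bar>C\<bar> * ?R')\<^sup>2)"
    proof (intro sum_mono)
      fix i J assume "i \<in> {0..s}" "J \<in> jsets {1..n} (j-1)"
      from comp[OF this] show "?T i J \<le> (cc * \<bar>C\<bar> * ?R')\<^sup>2"
        by (metis abs_ge_zero power2_abs power_mono)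
    qed
    also have "\<dots> = real (card {0..s} * card (jsets {1..n} (j-1))) * (cc * \<bar>C\<bar> * ?R')\<^sup>2" by (simp add: algebra_simps)
    finally have "RMc_norm s n A ?vs \<le> sqrt (real (card {0..s} * card (jsets {1..n} (j-1))) * (cc * \<bar>C\<bar> * ?R')\<^sup>2)"
      unfolding RMc_xi length_map lv by (rule real_sqrt_le_mono)
    also have "\<dots> = K * ?R'" unfolding real_sqrt_mult K_def using cc1 R0 by simp
    finally show "\<exists>vs\<in>int_frames n j. proj_norm s n vs = cc * proj_norm (s-1) (n-1) vs' \<and>
        RMc_norm s n A vs \<le> K * ?R'" using frame proj by blast
  qed
qed

definition Om :: "nat \<Rightarrow> nat \<Rightarrow> nat \<Rightarrow> (nat \<Rightarrow> nat \<Rightarrow> real) \<Rightarrow> real set" where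
  "Om \<sigma> N j M = {v. \<forall>B. \<exists>vs\<in>int_frames N j. proj_norm \<sigma> N vs > B \<and>
      RMc_norm \<sigma> N M vs < proj_norm \<sigma> N vs powr (- ((v + 1 - real j) / real j))}"

lemma omega_Om: "omega j m l M = Sup (ereal ` Om (m - 1) (m + l - 1) j M)"
  unfolding omega_def Om_def Let_def ..

lemma part1_Om:
  fixes A :: "nat \<Rightarrow> nat \<Rightarrow> real"
  assumes s1: "1 \<le> s" and sn: "s < n" and rs: "r \<le> s" and j1: "1 \<le> j"
    and A': "A' = (\<lambda>i c. A (if i < r then i else i + 1) c)"
  shows "Om s n j A \<subseteq> Om (s - 1) (n - 1) j A'"
proof
  fix v assume v: "v \<in> Om s n j A"
  show "v \<in> Om (s - 1) (n - 1) j A'"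
    unfolding Om_def
  proof (intro CollectI allI)
    fix B
    obtain vs where vs: "vs \<in> int_frames n j" "proj_norm s n vs > max B 0"
      "RMc_norm s n A vs < proj_norm s n vs powr (- ((v + 1 - real j) / real j))"
      using v unfolding Om_def by blast
    have pp: "proj_norm s n vs > 0" using vs(2) by simp
    note P = part1_frame[OF s1 sn rs j1 vs(1) pp A']
    show "\<exists>vs\<in>int_frames (n - 1) j. B < proj_norm (s - 1) (n - 1) vs \<and>
       RMc_norm (s - 1) (n - 1) A' vs < proj_norm (s - 1) (n - 1) vs powr (- ((v + 1 - real j) / real j))"
      using P vs by (intro bexI[of _ "map (\<lambda>v. v \<circ> psi r) vs"]) auto
  qed
qed

lemma part2_Om:
  fixes A :: "nat \<Rightarrow> nat \<Rightarrow> real" and q :: "nat \<Rightarrow> real"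
  assumes s1: "1 \<le> s" and sn: "s < n" and rs: "r \<le> s" and j1: "1 \<le> j"
    and A': "A' = (\<lambda>i c. A (if i < r then i else i + 1) c)"
    and qQ: "\<forall>i. q i \<in> \<rat>" and hq: "\<forall>c<n-s. A r c = (\<Sum>i\<in>{0..s}-{r}. q i * A i c)"
    and v: "v \<in> Om (s - 1) (n - 1) j A'" and eps: "\<epsilon> > 0"
  shows "v - \<epsilon> \<in> Om s n j A"
proof -
  obtain cc K where cK: "cc \<ge> 1" "K \<ge> 0" and H: "\<forall>vs'\<in>int_frames (n-1) j. \<exists>vs\<in>int_frames n j.
     proj_norm s n vs = cc * proj_norm (s-1) (n-1) vs' \<and> RMc_norm s n A vs \<le> K * RMc_norm (s-1) (n-1) A' vs'"
    using part2_frame[OF s1 sn rs j1 A' qQ hq] by blast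
  define e where "e = (v + 1 - real j) / real j"
  define d where "d = \<epsilon> / real j"
  have d0: "d > 0" using eps j1 by (simp add: d_def)
  have ex: "- ((v - \<epsilon> + 1 - real j) / real j) = d - e"
  proof -
    have jr: "real j \<noteq> 0" using j1 by simp
    show ?thesis unfolding d_def e_def using jr by (simp add: field_simps)
  qed
  define X0 where "X0 = ((K + 1) / cc powr (d - e)) powr (1 / d)"
  have cc0: "cc > 0" using cK by simp
  have Kc: "(K + 1) / cc powr (d - e) > 0" using cK cc0 by simp
  show ?thesis
    unfolding Om_def
  proof (intro CollectI allI)
    fix B
    obtain vs' where vs': "vs' \<in> int_frames (n-1) j" "proj_norm (s-1) (n-1) vs' > max B (max 1 X0)"
      "RMc_norm (s-1) (n-1) A' vs' < proj_norm (s-1) (n-1) vs' powr (- e)"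
      using v unfolding Om_def e_def by blast
    obtain vs where vs: "vs \<in> int_frames n j" "proj_norm s n vs = cc * proj_norm (s-1) (n-1) vs'"
      "RMc_norm s n A vs \<le> K * RMc_norm (s-1) (n-1) A' vs'"
      using H vs'(1) by blast
    let ?P' = "proj_norm (s-1) (n-1) vs'"
    let ?R' = "RMc_norm (s-1) (n-1) A' vs'"
    have P'1: "?P' > 1" "?P' > X0" "?P' > B" using vs'(2) by auto
    have P'0: "?P' > 0" using P'1 by simp
    have R'0: "?R' \<ge> 0" by (rule RMc_nonneg)
    have PB: "proj_norm s n vs > B"
    proof -
      have "1 * ?P' \<le> cc * ?P'" using mult_right_mono[OF cK(1), of ?P'] P'0 by simp
      then show ?thesis using vs(2) P'1 by linarith
    qed
    have X0pos: "X0 \<ge> 0" unfolding X0_def by simp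
    have "X0 powr d < ?P' powr d" using P'1(2) X0pos d0 by (simp add: powr_less_mono2)
    moreover have "X0 powr d = (K + 1) / cc powr (d - e)"
      unfolding X0_def using Kc d0 cK by (simp add: powr_powr)
    ultimately have key: "K + 1 < cc powr (d - e) * ?P' powr d"
      using cc0 by (simp add: divide_less_eq mult.commute)
    have "RMc_norm s n A vs \<le> (K + 1) * ?R'" using vs(3) R'0 by (simp add: algebra_simps)
    also have "\<dots> < (K + 1) * ?P' powr (- e)"
      using vs'(3) cK by (intro mult_strict_left_mono) auto
    also have "\<dots> \<le> cc powr (d - e) * ?P' powr d * ?P' powr (- e)"
      by (rule mult_right_mono[OF less_imp_le[OF key]]) simp
    also have "\<dots> = (cc * ?P') powr (d - e)"
    proof -
      have "?P' powr d * ?P' powr (- e) = ?P' powr (d - e)" using powr_add[of ?P' d "- e"] by simp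
      moreover have "(cc * ?P') powr (d - e) = cc powr (d - e) * ?P' powr (d - e)"
        using cc0 P'0 by (intro powr_mult)
      ultimately show ?thesis by (simp add: mult.assoc)
    qed
    finally have "RMc_norm s n A vs < proj_norm s n vs powr (d - e)" using vs(2) by simp
    then show "\<exists>vs\<in>int_frames n j. B < proj_norm s n vs \<and>
        RMc_norm s n A vs < proj_norm s n vs powr (- ((v - \<epsilon> + 1 - real j) / real j))"
      using vs(1) PB unfolding ex by blast
  qed
qed

theorem lemma5p7:
  fixes s n r :: nat and A :: "nat \<Rightarrow> nat \<Rightarrow> real"
  assumes "1 \<le> s" and "s < n" and "r \<le> s"
  defines "A' \<equiv> (\<lambda>i c. A (if i < r then i else i + 1) c)"
  shows "(\<forall>j\<in>{1..n-s}. omega j s (n - s) A' \<ge> omega j (s + 1) (n - s) A)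
    \<and> ((\<exists>q :: nat \<Rightarrow> real. (\<forall>i. q i \<in> \<rat>) \<and>
          (\<forall>c<n-s. A r c = (\<Sum>i\<in>{0..s}-{r}. q i * A i c)))
        \<longrightarrow> (\<forall>j\<in>{1..n-s}. omega j s (n - s) A' = omega j (s + 1) (n - s) A))"
proof -
  have A': "A' = (\<lambda>i c. A (if i < r then i else i + 1) c)" unfolding A'_def ..
  have e1: "omega j s (n - s) A' = Sup (ereal ` Om (s - 1) (n - 1) j A')" for j
    unfolding omega_Om using assms(2) by simp
  have e2: "omega j (s + 1) (n - s) A = Sup (ereal ` Om s n j A)" for j
    unfolding omega_Om using assms(2) by simp
  have P1: "omega j s (n - s) A' \<ge> omega j (s + 1) (n - s) A" if j: "j \<in> {1..n-s}" for j
    unfolding e1 e2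
    by (rule Sup_subset_mono, rule image_mono, rule part1_Om[OF assms(1,2,3) _ A']) (use j in simp)
  show ?thesis
  proof (intro conjI ballI impI)
    fix j assume "j \<in> {1..n-s}" then show "omega j s (n - s) A' \<ge> omega j (s + 1) (n - s) A" by (rule P1)
  next
    fix j assume ex: "\<exists>q :: nat \<Rightarrow> real. (\<forall>i. q i \<in> \<rat>) \<and> (\<forall>c<n-s. A r c = (\<Sum>i\<in>{0..s}-{r}. q i * A i c))"
      and j: "j \<in> {1..n-s}"
    obtain q :: "nat \<Rightarrow> real" where qQ: "\<forall>i. q i \<in> \<rat>" and hq: "\<forall>c<n-s. A r c = (\<Sum>i\<in>{0..s}-{r}. q i * A i c)"
      using ex by blast
    have j1: "1 \<le> j" using j by simp
    have "Sup (ereal ` Om (s - 1) (n - 1) j A') \<le> Sup (ereal ` Om s n j A)"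
    proof (rule Sup_least)
      fix x assume "x \<in> ereal ` Om (s - 1) (n - 1) j A'"
      then obtain v where v: "v \<in> Om (s - 1) (n - 1) j A'" "x = ereal v" by blast
      show "x \<le> Sup (ereal ` Om s n j A)"
        unfolding v(2)
      proof (rule ereal_le_epsilon2)
        fix e :: real assume e: "0 < e"
        have "v - e \<in> Om s n j A" by (rule part2_Om[OF assms(1,2,3) j1 A' qQ hq v(1) e])
        then have "ereal (v - e) \<le> Sup (ereal ` Om s n j A)" by (intro Sup_upper) auto
        then have "ereal (v - e) + ereal e \<le> Sup (ereal ` Om s n j A) + ereal e" by (rule add_right_mono)
        then show "ereal v \<le> Sup (ereal ` Om s n j A) + ereal e" by simp
      qed
    qed
    then show "omega j s (n - s) A' = omega j (s + 1) (n - s) A"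
      using P1[OF j] unfolding e1 e2 by (rule antisym)
  qed
qed

end
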